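(* Let $f$ be a CR holomorphic function (i.e. $Z_{\overline\alpha}f=0$ for all $\alpha$) defined near $0\in\mathbb{H}^n$. Then for every $m$ the weight $m$ part of $f$ is \[ f_{(m)}=\sum_{\|\mathcal{I}\|=m}\frac{1}{|\mathcal{I}|!}\,z^{\mathcal{I}}\,Z_{\mathcal{I}}f(0), \] the sum being over all ordered lists $\mathcal{I}=I_1\dots I_k$ of indices in $\{0,1,\dots,n\}$ of weight $m$.
   Context: $\mathbb{H}^n=\mathbb{C}^n\times\mathbb{R}$ with coordinates $(z^\alpha,t)$, $\alpha=1,\dots,n$, $z_\alpha=\overline{z^\alpha}$, $|z|^2=z^\alpha z_\alpha$, and CR structure spanned by $Z_\alpha=\partial/\partial z^\alpha+\frac i2 z_\alpha\partial_t$; $Z_{\overline\alpha}=\overline{Z_\alpha}$. Set $Z_0=-i\partial_t$ and $z^0=-|z|^2/2+it$. Dilations $\delta_s(z,t)=(sz,s^2t)$, $s>0$, have generator $X=z^\alpha\partial_\alpha+z^{\overline\alpha}\partial_{\overline\alpha}+2t\partial_t$; a function $\varphi$ is decomposed formally as $\varphi\sim\sum_m\varphi_{(m)}$ with $X\varphi_{(m)}=m\varphi_{(m)}$ ($\varphi_{(m)}$ is the weight $m$ part). For a list $\mathcal{I}=I_1\dots I_k$ of indices in $\{0,\dots,n\}$: $|\mathcal{I}|=k$, $\|\mathcal{I}\|=\sum\|I_j\|$ with $\|\alpha\|=1$, $\|0\|=2$, $z^{\mathcal{I}}=z^{I_1}\cdots z^{I_k}$, $Z_{\mathcal{I}}=Z_{I_1}\cdots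 Z_{I_k}$. *)

theory Defs
  imports "HOL-Analysis.Analysis"
begin

text \<open>Points of the Heisenberg group H^n = C^n x R; the complex coordinates
  z^alpha are indexed by a finite type 'n (so n = CARD('n)).  The index 0 of the
  paper is represented by None, the index alpha by Some alpha.\<close>

type_synonym 'n heis = "(complex ^ 'n) \<times> real"

definition dirD :: "('a::real_normed_vector \<Rightarrow> complex) \<Rightarrow> 'a \<Rightarrow> 'a \<Rightarrow> complex" where
  "dirD f v p = vector_derivative (\<lambda>s::real. f (p + s *\<^sub>R v)) (at 0)"

fun Diter :: "'a::real_normed_vector list \<Rightarrow> ('a \<Rightarrow> complex) \<Rightarrow> 'a \<Rightarrow> complex" where
  "Diter [] f = f"
| "Diter (v # vs) f = dirD (Diter vs f) v"

definition Cinf_on :: "'a::real_normed_vector set \<Rightarrow> ('a \<Rightarrow> complex) \<Rightarrow> bool" where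
  "Cinf_on U f \<longleftrightarrow> (\<forall>vs. Diter vs f differentiable_on U)"

definition dx :: "'n \<Rightarrow> ('n::finite heis \<Rightarrow> complex) \<Rightarrow> 'n heis \<Rightarrow> complex" where
  "dx a f p = dirD f (axis a 1, 0) p"
definition dy :: "'n \<Rightarrow> ('n::finite heis \<Rightarrow> complex) \<Rightarrow> 'n heis \<Rightarrow> complex" where
  "dy a f p = dirD f (axis a \<i>, 0) p"
definition dt :: "('n::finite heis \<Rightarrow> complex) \<Rightarrow> 'n heis \<Rightarrow> complex" where
  "dt f p = dirD f (0, 1) p"

text \<open>Z_alpha = d/dz^alpha + (i/2) z_alpha d/dt,  Z_{bar alpha} = conjugate,  Z_0 = -i d/dt.\<close>
definition heis_Z :: "'n \<Rightarrow> ('n::finite heis \<Rightarrow> complex) \<Rightarrow> 'n heis \<Rightarrow> complex" where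
  "heis_Z a f p = (dx a f p - \<i> * dy a f p) / 2 + (\<i> / 2) * cnj (fst p $ a) * dt f p"
definition heis_Zbar :: "'n \<Rightarrow> ('n::finite heis \<Rightarrow> complex) \<Rightarrow> 'n heis \<Rightarrow> complex" where
  "heis_Zbar a f p = (dx a f p + \<i> * dy a f p) / 2 - (\<i> / 2) * (fst p $ a) * dt f p"
definition heis_Z0 :: "('n::finite heis \<Rightarrow> complex) \<Rightarrow> 'n heis \<Rightarrow> complex" where
  "heis_Z0 f p = - \<i> * dt f p"

fun Zidx :: "'n option \<Rightarrow> ('n::finite heis \<Rightarrow> complex) \<Rightarrow> 'n heis \<Rightarrow> complex" where
  "Zidx None f = heis_Z0 f"
| "Zidx (Some a) f = heis_Z a f"

definition ZI :: "'n option list \<Rightarrow> ('n::finite heis \<Rightarrow> complex) \<Rightarrow> 'n heis \<Rightarrow> complex" where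
  "ZI I f = foldr Zidx I f"

fun zcoord :: "'n option \<Rightarrow> 'n::finite heis \<Rightarrow> complex" where
  "zcoord None p = - complex_of_real ((\<Sum>a\<in>UNIV. (cmod (fst p $ a))\<^sup>2) / 2) + \<i> * complex_of_real (snd p)"
| "zcoord (Some a) p = fst p $ a"

definition zI :: "'n option list \<Rightarrow> 'n::finite heis \<Rightarrow> complex" where
  "zI I p = prod_list (map (\<lambda>i. zcoord i p) I)"

fun idx_wt :: "'n option \<Rightarrow> nat" where
  "idx_wt None = 2"
| "idx_wt (Some a) = 1"

definition list_wt :: "'n option list \<Rightarrow> nat" where
  "list_wt I = sum_list (map idx_wt I)"

definition dil :: "real \<Rightarrow> 'n::finite heis \<Rightarrow> 'n heis" where
  "dil s p = (s *\<^sub>R fst p, s\<^sup>2 * snd p)"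

fun sderiv :: "nat \<Rightarrow> (real \<Rightarrow> complex) \<Rightarrow> real \<Rightarrow> complex" where
  "sderiv 0 g = g"
| "sderiv (Suc k) g = (\<lambda>s. vector_derivative (sderiv k g) (at s))"

text \<open>Weight m part: the coefficient of s^m in the Taylor expansion of
  s \<mapsto> f(delta_s p) at s = 0, i.e. the weighted-homogeneous degree m part of the
  Taylor series of f at 0.\<close>
definition weight_part :: "nat \<Rightarrow> ('n::finite heis \<Rightarrow> complex) \<Rightarrow> 'n heis \<Rightarrow> complex" where
  "weight_part m f p = sderiv m (\<lambda>s. f (dil s p)) 0 / of_nat (fact m)"

end

theory Submission
  imports Defs "HOL-Library.Product_Plus"
begin

lemma dirD_hasvd:
  fixes h :: "'a::real_normed_vector \<Rightarrow> complex"
  assumes "h differentiable (at (y + a0 *\<^sub>R v))"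
  shows "((\<lambda>a. h (y + a *\<^sub>R v)) has_vector_derivative
           frechet_derivative h (at (y + a0 *\<^sub>R v)) v) (at a0)"
proof -
  let ?h' = "frechet_derivative h (at (y + a0 *\<^sub>R v))"
  have d: "(h has_derivative ?h') (at (y + a0 *\<^sub>R v))"
    using assms frechet_derivative_works by blast
  have l: "((\<lambda>a. y + a *\<^sub>R v) has_derivative (\<lambda>a. a *\<^sub>R v)) (at a0)"
    by (auto intro!: derivative_eq_intros)
  have "((\<lambda>a. h (y + a *\<^sub>R v)) has_derivative (\<lambda>a. ?h' (a *\<^sub>R v))) (at a0)"
    using has_derivative_compose[OF l d] by (simp add: o_def)
  moreover have "(\<lambda>a. ?h' (a *\<^sub>R v)) = (\<lambda>a. a *\<^sub>R ?h' v)"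
    using d has_derivative_bounded_linear linear_scale real_bounded_linear
    by (metis bounded_linear.linear linear_cmul)
  ultimately show ?thesis unfolding has_vector_derivative_def by simp
qed

lemma dirD_frechet:
  fixes h :: "'a::real_normed_vector \<Rightarrow> complex"
  assumes "h differentiable (at q)"
  shows "dirD h v q = frechet_derivative h (at q) v"
proof -
  have "((\<lambda>a. h (q + a *\<^sub>R v)) has_vector_derivative
           frechet_derivative h (at (q + 0 *\<^sub>R v)) v) (at 0)"
    by (rule dirD_hasvd) (use assms in simp)
  then show ?thesis unfolding dirD_def by (simp add: vector_derivative_at)
qed

lemma dirD_hasvd2:
  fixes h :: "'a::real_normed_vector \<Rightarrow> complex"
  assumes "h differentiable (at (y + a0 *\<^sub>R v))"
  shows "((\<lambda>a. h (y + a *\<^sub>R v)) has_vector_derivative dirD h v (y + a0 *\<^sub>R v)) (at a0)"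
  using dirD_hasvd[OF assms] dirD_frechet[OF assms] by simp

lemma Diter_snoc: "Diter (vs @ [v]) h = Diter vs (dirD h v)"
  by (induction vs) auto

lemma Diter_append: "Diter ws (Diter vs h) = Diter (ws @ vs) h"
  by (induction ws) auto

lemma Cinf_Diter: "Cinf_on U h \<Longrightarrow> Cinf_on U (Diter vs h)"
  unfolding Cinf_on_def by (simp add: Diter_append)

lemma Cinf_dirD: "Cinf_on U h \<Longrightarrow> Cinf_on U (dirD h v)"
  using Cinf_Diter[of U h "[v]"] by simp

lemma Cinf_diff_on: "Cinf_on U h \<Longrightarrow> h differentiable_on U"
  unfolding Cinf_on_def using Diter.simps(1) by metis

lemma Cinf_diff_at: "open U \<Longrightarrow> Cinf_on U h \<Longrightarrow> p \<in> U \<Longrightarrow> h differentiable (at p)"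
  using Cinf_diff_on differentiable_on_eq_differentiable_at by blast

lemma Cinf_cont_at: "open U \<Longrightarrow> Cinf_on U h \<Longrightarrow> p \<in> U \<Longrightarrow> isCont h p"
  using Cinf_diff_at differentiable_imp_continuous_within by blast

lemma dirD_cong:
  fixes h k :: "'a::real_normed_vector \<Rightarrow> complex"
  assumes "open U" "\<forall>x\<in>U. h x = k x" "p \<in> U"
  shows "dirD h v p = dirD k v p"
proof -
  have c: "continuous (at 0) (\<lambda>s::real. p + s *\<^sub>R v)"
    by (intro continuous_intros)
  have o: "open ((\<lambda>s::real. p + s *\<^sub>R v) -` U)"
    by (rule continuous_open_vimage[OF assms(1)]) (intro continuous_intros)
  have "\<forall>\<^sub>F s in nhds 0. p + s *\<^sub>R v \<in> U"
    unfolding eventually_nhds using o assms(3) by (intro exI[of _ "(\<lambda>s::real. p + s *\<^sub>R v) -` U"]) auto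
  then have "\<forall>\<^sub>F s in nhds 0. s \<in> UNIV \<longrightarrow> h (p + s *\<^sub>R v) = k (p + s *\<^sub>R v)"
    by eventually_elim (use assms(2) in auto)
  then show ?thesis unfolding dirD_def
    by (intro vector_derivative_cong_eq) auto
qed

lemma Diter_cong:
  assumes "open U" "\<forall>x\<in>U. h x = k x"
  shows "\<forall>p\<in>U. Diter vs h p = Diter vs k p"
  using assms by (induction vs) (auto intro: dirD_cong)

lemma diff_on_cong:
  assumes "open U" "\<forall>x\<in>U. h x = k x" "h differentiable_on U"
  shows "k differentiable_on U"
  unfolding differentiable_on_eq_differentiable_at[OF assms(1)]
proof
  fix x assume x: "x \<in> U"
  then obtain D where "(h has_derivative D) (at x)"
    using assms differentiable_on_eq_differentiable_at differentiable_def by blast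
  then have "(k has_derivative D) (at x)"
    by (rule has_derivative_transform_within_open[OF _ assms(1) x]) (use assms(2) in auto)
  then show "k differentiable at x" unfolding differentiable_def by blast
qed

lemma Cinf_cong:
  assumes "open U" "\<forall>x\<in>U. h x = k x" "Cinf_on U h"
  shows "Cinf_on U k"
  unfolding Cinf_on_def
proof
  fix vs
  show "Diter vs k differentiable_on U"
    using diff_on_cong[OF assms(1) Diter_cong[OF assms(1,2)]] assms(3)
    unfolding Cinf_on_def by blast
qed

lemma dirD_add:
  fixes h k :: "'a::real_normed_vector \<Rightarrow> complex"
  assumes "h differentiable (at p)" "k differentiable (at p)"
  shows "dirD (\<lambda>x. h x + k x) v p = dirD h v p + dirD k v p"
proof -
  have "((\<lambda>a. h (p + a *\<^sub>R v)) has_vector_derivative dirD h v (p + 0 *\<^sub>R v)) (at 0)"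
    by (rule dirD_hasvd2) (use assms in simp)
  moreover have "((\<lambda>a. k (p + a *\<^sub>R v)) has_vector_derivative dirD k v (p + 0 *\<^sub>R v)) (at 0)"
    by (rule dirD_hasvd2) (use assms in simp)
  ultimately have "((\<lambda>a. h (p + a *\<^sub>R v) + k (p + a *\<^sub>R v)) has_vector_derivative
       dirD h v p + dirD k v p) (at 0)"
    using has_vector_derivative_add by fastforce
  then show ?thesis unfolding dirD_def by (simp add: vector_derivative_at)
qed

lemma dirD_cmult:
  fixes h :: "'a::real_normed_vector \<Rightarrow> complex"
  assumes "h differentiable (at p)"
  shows "dirD (\<lambda>x. c * h x) v p = c * dirD h v p"
proof -
  have "((\<lambda>a. h (p + a *\<^sub>R v)) has_vector_derivative dirD h v (p + 0 *\<^sub>R v)) (at 0)"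
    by (rule dirD_hasvd2) (use assms in simp)
  then have "((\<lambda>a. c * h (p + a *\<^sub>R v)) has_vector_derivative c * dirD h v p) (at 0)"
    using has_vector_derivative_mult_right by fastforce
  then show ?thesis unfolding dirD_def by (simp add: vector_derivative_at)
qed

lemma dirD_zero: "dirD (\<lambda>x. 0) v p = 0"
  unfolding dirD_def by (simp add: vector_derivative_at)

lemma Diter_zero: "Diter vs (\<lambda>x. 0) = (\<lambda>x. 0)"
  by (induction vs) (auto simp: dirD_zero[abs_def])

lemma Cinf_zero: "Cinf_on U (\<lambda>x. 0)"
  unfolding Cinf_on_def Diter_zero by simp

lemma Cinf_add:
  assumes "open U" "Cinf_on U h" "Cinf_on U k"
  shows "Cinf_on U (\<lambda>x. h x + k x)"
proof -
  have eq: "\<forall>p\<in>U. Diter vs (\<lambda>x. h x + k x) p = Diter vs h p + Diter vs k p" for vs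
  proof (induction vs)
    case Nil then show ?case by simp
  next
    case (Cons v vs)
    show ?case
    proof
      fix p assume p: "p \<in> U"
      have "Diter (v # vs) (\<lambda>x. h x + k x) p = dirD (\<lambda>x. Diter vs h x + Diter vs k x) v p"
        using dirD_cong[OF assms(1) Cons p] by simp
      also have "\<dots> = Diter (v # vs) h p + Diter (v # vs) k p"
        using dirD_add[OF Cinf_diff_at[OF assms(1) Cinf_Diter[OF assms(2)] p]
          Cinf_diff_at[OF assms(1) Cinf_Diter[OF assms(3)] p]] by simp
      finally show "Diter (v # vs) (\<lambda>x. h x + k x) p = Diter (v # vs) h p + Diter (v # vs) k p" .
    qed
  qed
  show ?thesis unfolding Cinf_on_def
  proof
    fix vs
    have "(\<lambda>x. Diter vs h x + Diter vs k x) differentiable_on U"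
      using assms(2,3) unfolding Cinf_on_def by (intro differentiable_on_add) auto
    then show "Diter vs (\<lambda>x. h x + k x) differentiable_on U"
      by (rule diff_on_cong[OF assms(1), rotated]) (use eq in auto)
  qed
qed

lemma Cinf_cmult:
  assumes "open U" "Cinf_on U h"
  shows "Cinf_on U (\<lambda>x. c * h x)"
proof -
  have eq: "\<forall>p\<in>U. Diter vs (\<lambda>x. c * h x) p = c * Diter vs h p" for vs
  proof (induction vs)
    case Nil then show ?case by simp
  next
    case (Cons v vs)
    show ?case
    proof
      fix p assume p: "p \<in> U"
      have "Diter (v # vs) (\<lambda>x. c * h x) p = dirD (\<lambda>x. c * Diter vs h x) v p"
        using dirD_cong[OF assms(1) Cons p] by simp
      also have "\<dots> = c * Diter (v # vs) h p"
        using dirD_cmult[OF Cinf_diff_at[OF assms(1) Cinf_Diter[OF assms(2)] p]] by simp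
      finally show "Diter (v # vs) (\<lambda>x. c * h x) p = c * Diter (v # vs) h p" .
    qed
  qed
  show ?thesis unfolding Cinf_on_def
  proof
    fix vs
    have "(\<lambda>x. c * Diter vs h x) differentiable_on U"
      using assms(2) unfolding Cinf_on_def by (intro differentiable_on_mult) auto
    then show "Diter vs (\<lambda>x. c * h x) differentiable_on U"
      by (rule diff_on_cong[OF assms(1), rotated]) (use eq in auto)
  qed
qed

lemma dirD_mult:
  fixes h g :: "'a::real_normed_vector \<Rightarrow> complex"
  assumes "g differentiable (at p)" "h differentiable (at p)"
  shows "dirD (\<lambda>x. g x * h x) v p = dirD g v p * h p + g p * dirD h v p"
proof -
  have "((\<lambda>a. h (p + a *\<^sub>R v)) has_vector_derivative dirD h v (p + 0 *\<^sub>R v)) (at 0)"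
    by (rule dirD_hasvd2) (use assms in simp)
  moreover have "((\<lambda>a. g (p + a *\<^sub>R v)) has_vector_derivative dirD g v (p + 0 *\<^sub>R v)) (at 0)"
    by (rule dirD_hasvd2) (use assms in simp)
  ultimately have "((\<lambda>a. g (p + a *\<^sub>R v) * h (p + a *\<^sub>R v)) has_vector_derivative
       g p * dirD h v p + dirD g v p * h p) (at 0)"
    using has_vector_derivative_mult by fastforce
  then show ?thesis unfolding dirD_def by (simp add: vector_derivative_at)
qed

definition aff :: "complex \<Rightarrow> (complex ^ 'n \<Rightarrow> complex) \<Rightarrow> 'n::finite heis \<Rightarrow> complex" where
  "aff c0 cl x = c0 + cl (fst x)"

lemma aff_hasderiv:
  assumes "bounded_linear cl"
  shows "(aff c0 cl has_derivative (\<lambda>y. cl (fst y))) (at p)"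
proof -
  have "bounded_linear (\<lambda>y::'a heis. cl (fst y))"
    using bounded_linear_compose[OF assms bounded_linear_fst] by (simp add: o_def)
  then have "((\<lambda>y::'a heis. cl (fst y)) has_derivative (\<lambda>y. cl (fst y))) (at p)"
    by (rule bounded_linear_imp_has_derivative)
  then show ?thesis unfolding aff_def[abs_def]
    by (auto intro!: derivative_eq_intros)
qed

lemma aff_diff: "bounded_linear cl \<Longrightarrow> aff c0 cl differentiable (at p)"
  using aff_hasderiv differentiable_def by blast

lemma dirD_aff: "bounded_linear cl \<Longrightarrow> dirD (aff c0 cl) v p = cl (fst v)"
  using dirD_frechet[OF aff_diff] frechet_derivative_at[OF aff_hasderiv] by metis

lemma dirD_amult:
  assumes "bounded_linear cl" "h differentiable (at p)"
  shows "dirD (\<lambda>x. aff c0 cl x * h x) v p = cl (fst v) * h p + aff c0 cl p * dirD h v p"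
  using dirD_mult[OF aff_diff[OF assms(1)] assms(2)] dirD_aff[OF assms(1)] by simp

lemma Cinf_amult:
  assumes "open U" "Cinf_on U h" "bounded_linear cl"
  shows "Cinf_on U (\<lambda>x. aff c0 cl x * h x)"
proof -
  have eq: "\<exists>R. Cinf_on U R \<and> (\<forall>p\<in>U. Diter vs (\<lambda>x. aff c0 cl x * h x) p
                 = aff c0 cl p * Diter vs h p + R p)" for vs
  proof (induction vs)
    case Nil then show ?case by (intro exI[of _ "\<lambda>x. 0"]) (simp add: Cinf_zero)
  next
    case (Cons v vs)
    then obtain R where R: "Cinf_on U R"
      "\<forall>p\<in>U. Diter vs (\<lambda>x. aff c0 cl x * h x) p = aff c0 cl p * Diter vs h p + R p" by blast
    let ?R = "\<lambda>x. cl (fst v) * Diter vs h x + dirD R v x"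
    have "Cinf_on U ?R"
      by (intro Cinf_add Cinf_cmult Cinf_dirD Cinf_Diter assms R)
    moreover have "\<forall>p\<in>U. Diter (v # vs) (\<lambda>x. aff c0 cl x * h x) p
                 = aff c0 cl p * Diter (v # vs) h p + ?R p"
    proof
      fix p assume p: "p \<in> U"
      have d1: "Diter vs h differentiable (at p)"
        using Cinf_diff_at[OF assms(1) Cinf_Diter[OF assms(2)] p] .
      have d2: "R differentiable (at p)" using Cinf_diff_at[OF assms(1) R(1) p] .
      have d3: "(\<lambda>x. aff c0 cl x * Diter vs h x) differentiable (at p)"
        using aff_diff[OF assms(3)] d1 by (intro differentiable_mult) auto
      have "Diter (v # vs) (\<lambda>x. aff c0 cl x * h x) p
          = dirD (\<lambda>x. aff c0 cl x * Diter vs h x + R x) v p"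
        using dirD_cong[OF assms(1) R(2) p] by simp
      also have "\<dots> = dirD (\<lambda>x. aff c0 cl x * Diter vs h x) v p + dirD R v p"
        using dirD_add[OF d3 d2] by simp
      also have "\<dots> = aff c0 cl p * Diter (v # vs) h p + ?R p"
        using dirD_amult[OF assms(3) d1] by simp
      finally show "Diter (v # vs) (\<lambda>x. aff c0 cl x * h x) p
                 = aff c0 cl p * Diter (v # vs) h p + ?R p" .
    qed
    ultimately show ?case by blast
  qed
  show ?thesis unfolding Cinf_on_def
  proof
    fix vs
    obtain R where R: "Cinf_on U R"
      "\<forall>p\<in>U. Diter vs (\<lambda>x. aff c0 cl x * h x) p = aff c0 cl p * Diter vs h p + R p"
      using eq by blast
    have a: "aff c0 cl differentiable_on U"
      using aff_diff[OF assms(3)] by (intro differentiable_at_imp_differentiable_on) auto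
    have b: "Diter vs h differentiable_on U" using assms(2) unfolding Cinf_on_def by blast
    have "(\<lambda>x. aff c0 cl x * Diter vs h x + R x) differentiable_on U"
      using Cinf_diff_on[OF R(1)] differentiable_on_mult[OF a b]
      by (intro differentiable_on_add) auto
    then show "Diter vs (\<lambda>x. aff c0 cl x * h x) differentiable_on U"
      by (rule diff_on_cong[OF assms(1), rotated]) (use R in auto)
  qed
qed

lemma schwarz_est:
  fixes h :: "'a::real_normed_vector \<Rightarrow> complex"
  assumes U: "open U" and h: "Cinf_on U h" and p: "p \<in> U" and e: "e > 0"
  shows "\<exists>d>0. \<forall>r. 0 < r \<and> r < d \<longrightarrow>
    norm (h (p + r *\<^sub>R u + r *\<^sub>R w) - h (p + r *\<^sub>R u) - h (p + r *\<^sub>R w) + h p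
          - (r^2) *\<^sub>R dirD (dirD h u) w p) \<le> 9 * e * r^2"
proof -
  define H where "H = dirD (dirD h u) w"
  have hu: "Cinf_on U (dirD h u)" using Cinf_dirD[OF h] .
  have HC: "Cinf_on U H" unfolding H_def using Cinf_dirD[OF hu] .
  have "isCont H p" using Cinf_cont_at[OF U HC p] .
  then obtain d1 where d1: "d1 > 0" "\<forall>x. dist x p < d1 \<longrightarrow> dist (H x) (H p) < e"
    using e unfolding continuous_at_eps_delta by blast
  obtain d2 where d2: "d2 > 0" "ball p d2 \<subseteq> U" using openE[OF U p] by blast
  define \<rho> where "\<rho> = min d1 d2"
  have rho: "\<rho> > 0" "ball p \<rho> \<subseteq> U" "\<forall>x\<in>ball p \<rho>. norm (H x - H p) < e"
    using d1 d2 unfolding \<rho>_def by (auto simp: dist_norm norm_minus_commute)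
  define d where "d = \<rho> / (norm u + norm w + 1)"
  have npos: "norm u + norm w + 1 > 0" by (smt (verit) norm_ge_zero)
  have dpos: "d > 0" unfolding d_def using rho npos by (simp add: divide_pos_pos)
  show ?thesis
  proof (intro exI[of _ d] conjI allI impI dpos)
    fix r :: real assume r: "0 < r \<and> r < d"
    have rr: "r * (norm u + norm w + 1) < \<rho>"
      using r npos unfolding d_def by (simp add: pos_less_divide_eq)
    define q where "q a b = p + a *\<^sub>R u + b *\<^sub>R w" for a b
    have inball: "q a b \<in> ball p \<rho>" if "a \<in> {0..r}" "b \<in> {0..r}" for a b
    proof -
      have "norm (a *\<^sub>R u + b *\<^sub>R w) \<le> a * norm u + b * norm w"
        using that by (metis abs_of_nonneg atLeastAtMost_iff norm_scaleR norm_triangle_le order_refl)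
      also have "\<dots> \<le> r * norm u + r * norm w"
        using that by (intro add_mono mult_right_mono) auto
      also have "\<dots> < \<rho>" using rr r by (smt (verit) norm_ge_zero mult_nonneg_nonneg distrib_left)
      finally have "norm (a *\<^sub>R u + b *\<^sub>R w) < \<rho>" .
      then show ?thesis unfolding q_def mem_ball dist_norm
        by (metis add.assoc add_diff_cancel_left' norm_minus_commute)
    qed
    have inU: "q a b \<in> U" if "a \<in> {0..r}" "b \<in> {0..r}" for a b
      using inball[OF that] rho by blast
    have Hb: "norm (H (q a b) - H p) < e" if "a \<in> {0..r}" "b \<in> {0..r}" for a b
      using inball[OF that] rho by blast
    define g' where "g' a = dirD h u (q a r) - dirD h u (q a 0)" for a
    have step1: "norm (g' a - r *\<^sub>R H p) \<le> 3 * e * r" if a: "a \<in> {0..r}" for a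
    proof -
      define f1 where "f1 b = dirD h u ((p + a *\<^sub>R u) + b *\<^sub>R w)" for b
      have qeq: "(p + a *\<^sub>R u) + b *\<^sub>R w = q a b" for b unfolding q_def by simp
      have der: "(f1 has_vector_derivative H (q a b)) (at b within {0..r})" if b: "b \<in> {0..r}" for b
      proof -
        have "dirD h u differentiable (at ((p + a *\<^sub>R u) + b *\<^sub>R w))"
          using Cinf_diff_at[OF U hu inU[OF a b]] qeq by simp
        from dirD_hasvd2[OF this] show ?thesis unfolding f1_def H_def qeq
          by (rule has_vector_derivative_at_within)
      qed
      have "norm (f1 r - f1 0 - (r - 0) *\<^sub>R H (q a 0)) \<le> norm (r - 0) * (2 * e)"
      proof (rule vector_differentiable_bound_linearization[OF der])
        show "closed_segment 0 r \<subseteq> {0..r}" using r by (simp add: closed_segment_eq_real_ivl)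
        show "0 \<in> {0..r}" using r by simp
        fix b assume b: "b \<in> {0..r}"
        have "norm (H (q a b) - H (q a 0)) \<le> norm (H (q a b) - H p) + norm (H (q a 0) - H p)"
          by (metis norm_triangle_ineq4 diff_diff_eq2 diff_add_cancel add_diff_eq norm_minus_commute norm_triangle_sub)
        also have "\<dots> \<le> 2 * e" using Hb[OF a b] Hb[OF a, of 0] r by simp
        finally show "norm (H (q a b) - H (q a 0)) \<le> 2 * e" .
      qed auto
      then have A: "norm (g' a - r *\<^sub>R H (q a 0)) \<le> r * (2 * e)"
        unfolding g'_def f1_def using r qeq[of 0] qeq[of r] by simp
      have B: "norm (r *\<^sub>R H (q a 0) - r *\<^sub>R H p) \<le> r * e"
        using Hb[OF a, of 0] r by (simp add: scaleR_diff_right[symmetric])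
      have "norm (g' a - r *\<^sub>R H p) \<le> norm (g' a - r *\<^sub>R H (q a 0)) + norm (r *\<^sub>R H (q a 0) - r *\<^sub>R H p)"
        by (metis diff_add_cancel add_diff_eq norm_triangle_ineq diff_add_eq)
      then show ?thesis using A B by (simp add: algebra_simps)
    qed
    define g where "g a = h (q a r) - h (q a 0)" for a
    have gder: "(g has_vector_derivative g' a) (at a within {0..r})" if a: "a \<in> {0..r}" for a
    proof -
      have e1: "q a r = (p + r *\<^sub>R w) + a *\<^sub>R u" "q a 0 = p + a *\<^sub>R u" for a
        unfolding q_def by (simp_all add: algebra_simps)
      have r0: "r \<in> {0..r}" "0 \<in> {0..r}" using r by auto
      have d1: "h differentiable (at ((p + r *\<^sub>R w) + a *\<^sub>R u))"
        using Cinf_diff_at[OF U h inU[OF a r0(1)]] e1 by simp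
      have d2: "h differentiable (at (p + a *\<^sub>R u))"
        using Cinf_diff_at[OF U h inU[OF a r0(2)]] e1 by simp
      have "((\<lambda>a. h ((p + r *\<^sub>R w) + a *\<^sub>R u) - h (p + a *\<^sub>R u)) has_vector_derivative
              dirD h u ((p + r *\<^sub>R w) + a *\<^sub>R u) - dirD h u (p + a *\<^sub>R u)) (at a)"
        by (intro has_vector_derivative_diff dirD_hasvd2 d1 d2)
      then show ?thesis unfolding g_def g'_def e1
        by (rule has_vector_derivative_at_within)
    qed
    have "norm (g r - g 0 - (r - 0) *\<^sub>R g' 0) \<le> norm (r - 0) * (6 * e * r)"
    proof (rule vector_differentiable_bound_linearization[OF gder])
      show "closed_segment 0 r \<subseteq> {0..r}" using r by (simp add: closed_segment_eq_real_ivl)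
      show "0 \<in> {0..r}" using r by simp
      fix a assume a: "a \<in> {0..r}"
      have "norm (g' a - g' 0) \<le> norm (g' a - r *\<^sub>R H p) + norm (g' 0 - r *\<^sub>R H p)"
        by (metis norm_triangle_ineq4 diff_diff_eq2 diff_add_cancel add_diff_eq norm_minus_commute norm_triangle_sub)
      also have "\<dots> \<le> 6 * e * r" using step1[OF a] step1[of 0] r by simp
      finally show "norm (g' a - g' 0) \<le> 6 * e * r" .
    qed auto
    then have A: "norm (g r - g 0 - r *\<^sub>R g' 0) \<le> 6 * e * r^2"
      using r by (simp add: power2_eq_square algebra_simps)
    have B: "norm (r *\<^sub>R g' 0 - (r^2) *\<^sub>R H p) \<le> 3 * e * r^2"
    proof -
      have "r *\<^sub>R g' 0 - (r^2) *\<^sub>R H p = r *\<^sub>R (g' 0 - r *\<^sub>R H p)"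
        by (simp add: power2_eq_square scaleR_diff_right)
      then have "norm (r *\<^sub>R g' 0 - (r^2) *\<^sub>R H p) = r * norm (g' 0 - r *\<^sub>R H p)"
        using r by simp
      also have "\<dots> \<le> r * (3 * e * r)" using step1[of 0] r by (intro mult_left_mono) auto
      finally show ?thesis by (simp add: power2_eq_square algebra_simps)
    qed
    have "norm (g r - g 0 - (r^2) *\<^sub>R H p) \<le> norm (g r - g 0 - r *\<^sub>R g' 0) + norm (r *\<^sub>R g' 0 - (r^2) *\<^sub>R H p)"
      by (metis diff_add_cancel add_diff_eq norm_triangle_ineq diff_add_eq)
    also have "\<dots> \<le> 9 * e * r^2" using A B by simp
    finally have "norm (g r - g 0 - (r^2) *\<^sub>R H p) \<le> 9 * e * r^2" .
    moreover have "g r - g 0 = h (p + r *\<^sub>R u + r *\<^sub>R w) - h (p + r *\<^sub>R u) - h (p + r *\<^sub>R w) + h p"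
      unfolding g_def q_def by simp
    ultimately show "norm (h (p + r *\<^sub>R u + r *\<^sub>R w) - h (p + r *\<^sub>R u) - h (p + r *\<^sub>R w) + h p
          - (r^2) *\<^sub>R dirD (dirD h u) w p) \<le> 9 * e * r^2"
      unfolding H_def by simp
  qed
qed

lemma schwarz:
  fixes h :: "'a::real_normed_vector \<Rightarrow> complex"
  assumes U: "open U" and h: "Cinf_on U h" and p: "p \<in> U"
  shows "dirD (dirD h u) w p = dirD (dirD h w) u p"
proof (rule ccontr)
  define D1 where "D1 = dirD (dirD h u) w p"
  define D2 where "D2 = dirD (dirD h w) u p"
  assume "dirD (dirD h u) w p \<noteq> dirD (dirD h w) u p"
  then have ne: "norm (D1 - D2) > 0" unfolding D1_def D2_def by simp
  define e where "e = norm (D1 - D2) / 36"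
  have e: "e > 0" using ne unfolding e_def by simp
  obtain d1 where d1: "d1 > 0" "\<forall>r. 0 < r \<and> r < d1 \<longrightarrow>
    norm (h (p + r *\<^sub>R u + r *\<^sub>R w) - h (p + r *\<^sub>R u) - h (p + r *\<^sub>R w) + h p
          - (r^2) *\<^sub>R D1) \<le> 9 * e * r^2"
    using schwarz_est[OF U h p e, of u w] unfolding D1_def by blast
  obtain d2 where d2: "d2 > 0" "\<forall>r. 0 < r \<and> r < d2 \<longrightarrow>
    norm (h (p + r *\<^sub>R w + r *\<^sub>R u) - h (p + r *\<^sub>R w) - h (p + r *\<^sub>R u) + h p
          - (r^2) *\<^sub>R D2) \<le> 9 * e * r^2"
    using schwarz_est[OF U h p e, of w u] unfolding D2_def by blast
  define r where "r = min d1 d2 / 2"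
  have r: "0 < r" "r < d1" "r < d2" using d1 d2 unfolding r_def by auto
  define \<Delta> where "\<Delta> = h (p + r *\<^sub>R u + r *\<^sub>R w) - h (p + r *\<^sub>R u) - h (p + r *\<^sub>R w) + h p"
  have "p + r *\<^sub>R w + r *\<^sub>R u = p + r *\<^sub>R u + r *\<^sub>R w" by (simp add: algebra_simps)
  then have A: "norm (\<Delta> - (r^2) *\<^sub>R D1) \<le> 9 * e * r^2" "norm (\<Delta> - (r^2) *\<^sub>R D2) \<le> 9 * e * r^2"
    using d1(2) d2(2) r unfolding \<Delta>_def by (auto simp: algebra_simps)
  have "norm ((r^2) *\<^sub>R (D1 - D2)) \<le> norm (\<Delta> - (r^2) *\<^sub>R D1) + norm (\<Delta> - (r^2) *\<^sub>R D2)"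
    by (metis (no_types, lifting) norm_triangle_ineq4 scaleR_diff_right norm_minus_commute diff_diff_eq2
        diff_add_cancel add_diff_eq norm_triangle_sub)
  also have "\<dots> \<le> 18 * e * r^2" using A by simp
  finally have "r^2 * norm (D1 - D2) \<le> r^2 * (norm (D1 - D2) / 2)" unfolding e_def by simp
  then have "norm (D1 - D2) \<le> norm (D1 - D2) / 2" using r by simp
  then show False using ne by simp
qed

definition gop :: "complex \<Rightarrow> 'n heis \<Rightarrow> complex \<Rightarrow> 'n heis \<Rightarrow> complex \<Rightarrow> (complex^'n \<Rightarrow> complex)
   \<Rightarrow> ('n::finite heis \<Rightarrow> complex) \<Rightarrow> 'n heis \<Rightarrow> complex" where
  "gop k1 v1 k2 v2 c0 cl h p = k1 * dirD h v1 p + k2 * dirD h v2 p + aff c0 cl p * dirD h (0,1) p"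

lemma gop_Cinf:
  assumes "open U" "Cinf_on U h" "bounded_linear cl"
  shows "Cinf_on U (gop k1 v1 k2 v2 c0 cl h)"
  unfolding gop_def[abs_def] by (intro Cinf_add Cinf_cmult Cinf_amult Cinf_dirD assms)

lemma gop_cong:
  assumes "open U" "\<forall>x\<in>U. h x = k x" "p \<in> U"
  shows "gop k1 v1 k2 v2 c0 cl h p = gop k1 v1 k2 v2 c0 cl k p"
  unfolding gop_def using dirD_cong[OF assms] by simp

lemma gop_zero:
  assumes "open U" "\<forall>x\<in>U. h x = 0" "p \<in> U"
  shows "gop k1 v1 k2 v2 c0 cl h p = 0"
  using gop_cong[OF assms] unfolding gop_def by (simp add: dirD_zero)

lemma dirD_gop:
  assumes U: "open U" and h: "Cinf_on U h" and p: "p \<in> U" and cl: "bounded_linear cl"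
  shows "dirD (gop k1 v1 k2 v2 c0 cl h) w p
     = k1 * dirD (dirD h v1) w p + k2 * dirD (dirD h v2) w p
       + cl (fst w) * dirD h (0,1) p + aff c0 cl p * dirD (dirD h (0,1)) w p"
proof -
  have d: "dirD h v differentiable (at p)" for v
    using Cinf_diff_at[OF U Cinf_dirD[OF h] p] .
  have "dirD (gop k1 v1 k2 v2 c0 cl h) w p
      = dirD (\<lambda>x. k1 * dirD h v1 x + k2 * dirD h v2 x) w p
        + dirD (\<lambda>x. aff c0 cl x * dirD h (0,1) x) w p"
    unfolding gop_def[abs_def]
    by (intro dirD_add differentiable_add differentiable_mult differentiable_const d aff_diff cl)
  also have "dirD (\<lambda>x. k1 * dirD h v1 x + k2 * dirD h v2 x) w p
      = k1 * dirD (dirD h v1) w p + k2 * dirD (dirD h v2) w p"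
    by (subst dirD_add) (auto intro!: differentiable_mult differentiable_const d simp: dirD_cmult[OF d])
  also have "dirD (\<lambda>x. aff c0 cl x * dirD h (0,1) x) w p
      = cl (fst w) * dirD h (0,1) p + aff c0 cl p * dirD (dirD h (0,1)) w p"
    by (rule dirD_amult[OF cl d])
  finally show ?thesis by (simp add: algebra_simps)
qed

lemma gop_comm:
  assumes U: "open U" and h: "Cinf_on U h" and p: "p \<in> U"
    and cl1: "bounded_linear cl1" and cl2: "bounded_linear cl2"
  shows "gop k1 v1 k2 v2 c1 cl1 (gop m1 u1 m2 u2 c2 cl2 h) p
       - gop m1 u1 m2 u2 c2 cl2 (gop k1 v1 k2 v2 c1 cl1 h) p
     = (k1 * cl2 (fst v1) + k2 * cl2 (fst v2) - m1 * cl1 (fst u1) - m2 * cl1 (fst u2))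
       * dirD h (0,1) p"
proof -
  have s: "dirD (dirD h a) b p = dirD (dirD h b) a p" for a b
    using schwarz[OF U h p] .
  have z1: "cl1 0 = 0" "cl2 0 = 0"
    using cl1 cl2 by (simp_all add: linear_simps)
  show ?thesis
    unfolding gop_def[of k1 v1 k2 v2 c1 cl1 "gop m1 u1 m2 u2 c2 cl2 h" p]
      gop_def[of m1 u1 m2 u2 c2 cl2 "gop k1 v1 k2 v2 c1 cl1 h" p]
    unfolding dirD_gop[OF U h p cl1] dirD_gop[OF U h p cl2] fst_conv z1
    using s[of v1 u1] s[of v2 u1] s[of v1 u2] s[of v2 u2] s[of "(0,1)" u1] s[of "(0,1)" u2]
      s[of "(0,1)" v1] s[of "(0,1)" v2]
    by (simp add: algebra_simps)
qed

definition ZR :: "'n \<Rightarrow> ('n::finite heis \<Rightarrow> complex) \<Rightarrow> 'n heis \<Rightarrow> complex" where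
  "ZR a = gop (1/2) (axis a 1, 0) (-\<i>/2) (axis a \<i>, 0) 0 (\<lambda>z. -(\<i>/2) * cnj (z $ a))"

lemma Z_gop: "heis_Z a = gop (1/2) (axis a 1, 0) (-\<i>/2) (axis a \<i>, 0) 0 (\<lambda>z. (\<i>/2) * cnj (z $ a))"
  by (intro ext) (simp add: heis_Z_def gop_def dx_def dy_def dt_def aff_def field_simps)

lemma Zbar_gop: "heis_Zbar a = gop (1/2) (axis a 1, 0) (\<i>/2) (axis a \<i>, 0) 0 (\<lambda>z. -(\<i>/2) * (z $ a))"
  by (intro ext) (simp add: heis_Zbar_def gop_def dx_def dy_def dt_def aff_def field_simps)

lemma Z0_gop: "heis_Z0 = gop 0 0 0 0 (-\<i>) (\<lambda>z. 0)"
  by (intro ext) (simp add: heis_Z0_def gop_def dt_def aff_def)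

lemma bl1: "bounded_linear (\<lambda>z::complex^'n::finite. c * cnj (z $ a))"
  using bounded_linear_compose[OF bounded_linear_mult_right[of c]
        bounded_linear_compose[OF bounded_linear_cnj bounded_linear_vec_nth[of a]]]
  by (simp add: o_def)

lemma bl2: "bounded_linear (\<lambda>z::complex^'n::finite. c * (z $ a))"
  using bounded_linear_compose[OF bounded_linear_mult_right[of c] bounded_linear_vec_nth[of a]]
  by (simp add: o_def)

lemma bl0: "bounded_linear (\<lambda>z::complex^'n::finite. 0::complex)"
  by (rule bounded_linear_zero)

lemma Zidx_gop: "\<exists>k1 v1 k2 v2 c0 cl. bounded_linear cl \<and> Zidx i = gop k1 v1 k2 v2 c0 cl"
proof (cases i)
  case None
  then have "Zidx i = gop 0 0 0 0 (-\<i>) (\<lambda>z. 0)" by (intro ext) (simp add: Z0_gop None)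
  then show ?thesis using bl0 by blast
next
  case (Some a)
  then have "Zidx i = gop (1/2) (axis a 1, 0) (-\<i>/2) (axis a \<i>, 0) 0 (\<lambda>z. (\<i>/2) * cnj (z $ a))"
    by (intro ext) (simp add: Z_gop Some)
  then show ?thesis using bl1 by blast
qed

lemma Zidx_Cinf: "open U \<Longrightarrow> Cinf_on U h \<Longrightarrow> Cinf_on U (Zidx i h)"
  using Zidx_gop[of i] gop_Cinf by metis

lemma ZR_Cinf: "open U \<Longrightarrow> Cinf_on U h \<Longrightarrow> Cinf_on U (ZR a h)"
  unfolding ZR_def by (intro gop_Cinf bl1)

lemma Zbar_Cinf: "open U \<Longrightarrow> Cinf_on U h \<Longrightarrow> Cinf_on U (heis_Zbar a h)"
  unfolding Zbar_gop by (intro gop_Cinf bl2)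

lemma Zidx_cong: "open U \<Longrightarrow> \<forall>x\<in>U. h x = k x \<Longrightarrow> p \<in> U \<Longrightarrow> Zidx i h p = Zidx i k p"
  using Zidx_gop[of i] gop_cong by metis

lemma ZR_cong: "open U \<Longrightarrow> \<forall>x\<in>U. h x = k x \<Longrightarrow> p \<in> U \<Longrightarrow> ZR a h p = ZR a k p"
  unfolding ZR_def by (rule gop_cong)

lemma ZR_zero: "open U \<Longrightarrow> \<forall>x\<in>U. h x = 0 \<Longrightarrow> p \<in> U \<Longrightarrow> ZR a h p = 0"
  unfolding ZR_def by (rule gop_zero)

lemma Z0_zero: "open U \<Longrightarrow> \<forall>x\<in>U. h x = 0 \<Longrightarrow> p \<in> U \<Longrightarrow> heis_Z0 h p = 0"
  unfolding Z0_gop by (rule gop_zero)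

lemma axis_simps: "axis a (c::complex) $ b = (if b = a then c else 0)"
  by (simp add: axis_def)

lemma comm_Z_Z:
  assumes "open U" "Cinf_on U h" "p \<in> U"
  shows "heis_Z a (heis_Z b h) p = heis_Z b (heis_Z a h) p"
  using gop_comm[OF assms bl1 bl1, of "1/2" "(axis a 1, 0)" "-\<i>/2" "(axis a \<i>, 0)" 0 "\<i>/2" a
        "1/2" "(axis b 1, 0)" "-\<i>/2" "(axis b \<i>, 0)" 0 "\<i>/2" b]
  unfolding Z_gop by (cases "a = b") (simp_all add: axis_simps field_simps)

lemma comm_Z_Z0:
  assumes "open U" "Cinf_on U h" "p \<in> U"
  shows "heis_Z a (heis_Z0 h) p = heis_Z0 (heis_Z a h) p"
  using gop_comm[OF assms bl1 bl0, of "1/2" "(axis a 1, 0)" "-\<i>/2" "(axis a \<i>, 0)" 0 "\<i>/2" a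
        0 0 0 0 "-\<i>"]
  unfolding Z_gop Z0_gop by (simp add: axis_simps)

lemma comm_Zidx:
  assumes "open U" "Cinf_on U h" "p \<in> U"
  shows "Zidx i (Zidx j h) p = Zidx j (Zidx i h) p"
  using comm_Z_Z[OF assms] comm_Z_Z0[OF assms]
  by (cases i; cases j) auto

lemma comm_ZR_Z:
  assumes "open U" "Cinf_on U h" "p \<in> U"
  shows "ZR a (heis_Z b h) p = heis_Z b (ZR a h) p"
  using gop_comm[OF assms bl1 bl1, of "1/2" "(axis a 1, 0)" "-\<i>/2" "(axis a \<i>, 0)" 0 "-\<i>/2" a
        "1/2" "(axis b 1, 0)" "-\<i>/2" "(axis b \<i>, 0)" 0 "\<i>/2" b]
  unfolding Z_gop ZR_def by (cases "a = b") (simp_all add: axis_simps field_simps)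

lemma comm_ZR_Z0:
  assumes "open U" "Cinf_on U h" "p \<in> U"
  shows "ZR a (heis_Z0 h) p = heis_Z0 (ZR a h) p"
  using gop_comm[OF assms bl1 bl0, of "1/2" "(axis a 1, 0)" "-\<i>/2" "(axis a \<i>, 0)" 0 "-\<i>/2" a
        0 0 0 0 "-\<i>"]
  unfolding ZR_def Z0_gop by (simp add: axis_simps)

lemma comm_ZR_Zidx:
  assumes "open U" "Cinf_on U h" "p \<in> U"
  shows "ZR a (Zidx j h) p = Zidx j (ZR a h) p"
  using comm_ZR_Z[OF assms] comm_ZR_Z0[OF assms] by (cases j) auto

lemma comm_Zbar_ZR:
  assumes "open U" "Cinf_on U h" "p \<in> U"
  shows "heis_Zbar b (ZR a h) p = ZR a (heis_Zbar b h) p"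
  using gop_comm[OF assms bl2 bl1, of "1/2" "(axis b 1, 0)" "\<i>/2" "(axis b \<i>, 0)" 0 "-\<i>/2" b
        "1/2" "(axis a 1, 0)" "-\<i>/2" "(axis a \<i>, 0)" 0 "-\<i>/2" a]
  unfolding Zbar_gop ZR_def by (cases "a = b") (simp_all add: axis_simps field_simps)

lemma comm_Zbar_Z0:
  assumes "open U" "Cinf_on U h" "p \<in> U"
  shows "heis_Zbar b (heis_Z0 h) p = heis_Z0 (heis_Zbar b h) p"
  using gop_comm[OF assms bl2 bl0, of "1/2" "(axis b 1, 0)" "\<i>/2" "(axis b \<i>, 0)" 0 "-\<i>/2" b
        0 0 0 0 "-\<i>"]
  unfolding Zbar_gop Z0_gop by (simp add: axis_simps)

lemma ZR_at0: "ZR a h 0 = heis_Z a h 0"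
  unfolding ZR_def Z_gop gop_def aff_def by simp

lemma ZI_Nil[simp]: "ZI [] h = h" by (simp add: ZI_def)
lemma ZI_Cons[simp]: "ZI (i # J) h = Zidx i (ZI J h)" by (simp add: ZI_def)
lemma ZI_append: "ZI (A @ B) h = ZI A (ZI B h)" by (simp add: ZI_def)

lemma ZI_Cinf: "open U \<Longrightarrow> Cinf_on U h \<Longrightarrow> Cinf_on U (ZI J h)"
  by (induction J) (auto intro: Zidx_Cinf)

lemma ZI_cong: "open U \<Longrightarrow> \<forall>x\<in>U. h x = k x \<Longrightarrow> \<forall>p\<in>U. ZI J h p = ZI J k p"
  by (induction J) (auto intro: Zidx_cong)

lemma comm_word:
  assumes U: "open U" and h: "Cinf_on U h"
    and OC: "\<And>k. Cinf_on U k \<Longrightarrow> Cinf_on U (Op k)"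
    and Ocong: "\<And>k k' p. \<forall>x\<in>U. k x = k' x \<Longrightarrow> p \<in> U \<Longrightarrow> Op k p = Op k' p"
    and Ocomm: "\<And>k j p. Cinf_on U k \<Longrightarrow> p \<in> U \<Longrightarrow> Zidx j (Op k) p = Op (Zidx j k) p"
  shows "\<forall>p\<in>U. ZI J (Op h) p = Op (ZI J h) p"
proof (induction J)
  case Nil then show ?case by simp
next
  case (Cons j J)
  show ?case
  proof
    fix p assume p: "p \<in> U"
    have "ZI (j # J) (Op h) p = Zidx j (\<lambda>x. Op (ZI J h) x) p"
      using Zidx_cong[OF U Cons p] by simp
    also have "\<dots> = Op (Zidx j (ZI J h)) p"
      using Ocomm[OF ZI_Cinf[OF U h] p] by simp
    finally show "ZI (j # J) (Op h) p = Op (ZI (j # J) h) p" by simp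
  qed
qed

lemma comm_word_Zidx:
  assumes U: "open U" and h: "Cinf_on U h"
  shows "\<forall>p\<in>U. ZI J (Zidx i h) p = Zidx i (ZI J h) p"
  by (rule comm_word[OF U h]) (auto intro: Zidx_Cinf[OF U] Zidx_cong[OF U] comm_Zidx[OF U])

lemma comm_word_ZR:
  assumes U: "open U" and h: "Cinf_on U h"
  shows "\<forall>p\<in>U. ZI J (ZR a h) p = ZR a (ZI J h) p"
  by (rule comm_word[OF U h]) (auto intro: ZR_Cinf[OF U] ZR_cong[OF U] comm_ZR_Zidx[OF U, symmetric])

lemma ZI_insert:
  assumes U: "open U" and h: "Cinf_on U h" and p: "p \<in> U"
  shows "ZI (A @ x # B) h p = ZI (x # A @ B) h p"
proof -
  have "ZI (A @ x # B) h p = ZI A (Zidx x (ZI B h)) p" by (simp add: ZI_append)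
  also have "\<dots> = Zidx x (ZI A (ZI B h)) p"
    using comm_word_Zidx[OF U ZI_Cinf[OF U h]] p by blast
  finally show ?thesis by (simp add: ZI_append)
qed

lemma zI_insert: "zI (A @ x # B) p = zI (x # A @ B) p"
  by (simp add: zI_def ac_simps)

definition CR :: "'n::finite heis set \<Rightarrow> ('n heis \<Rightarrow> complex) \<Rightarrow> bool" where
  "CR U h \<longleftrightarrow> (\<forall>a. \<forall>q\<in>U. heis_Zbar a h q = 0)"

lemma CR_ZR:
  assumes U: "open U" and h: "Cinf_on U h" "CR U h"
  shows "CR U (ZR a h)"
  unfolding CR_def
proof (intro allI ballI)
  fix b q assume q: "q \<in> U"
  have "heis_Zbar b (ZR a h) q = ZR a (heis_Zbar b h) q" using comm_Zbar_ZR[OF U h(1) q] .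
  also have "\<dots> = 0" by (rule ZR_zero[OF U _ q]) (use h(2) in \<open>auto simp: CR_def\<close>)
  finally show "heis_Zbar b (ZR a h) q = 0" .
qed

lemma CR_Z0:
  assumes U: "open U" and h: "Cinf_on U h" "CR U h"
  shows "CR U (heis_Z0 h)"
  unfolding CR_def
proof (intro allI ballI)
  fix b q assume q: "q \<in> U"
  have "heis_Zbar b (heis_Z0 h) q = heis_Z0 (heis_Zbar b h) q" using comm_Zbar_Z0[OF U h(1) q] .
  also have "\<dots> = 0" by (rule Z0_zero[OF U _ q]) (use h(2) in \<open>auto simp: CR_def\<close>)
  finally show "heis_Zbar b (heis_Z0 h) q = 0" .
qed

lemma ZI_ZR_0:
  assumes U: "open U" "0 \<in> U" and h: "Cinf_on U h"
  shows "ZI J (ZR a h) 0 = ZI (Some a # J) h 0"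
  using comm_word_ZR[OF U(1) h] U(2) ZR_at0 by simp

lemma ZI_Z0_0:
  assumes U: "open U" "0 \<in> U" and h: "Cinf_on U h"
  shows "ZI J (heis_Z0 h) 0 = ZI (None # J) h 0"
  using comm_word_Zidx[OF U(1) h, of J None] U(2) by simp

lemma per_a:
  fixes z D1 D2 D3 :: complex and s :: real
  assumes "(1/2) * D1 + (\<i>/2) * D2 + (0 + -(\<i>/2) * (of_real s * z)) * D3 = 0"
  shows "Re z *\<^sub>R D1 + Im z *\<^sub>R D2
       = z * ((1/2) * D1 + (-\<i>/2) * D2 + (0 + -(\<i>/2) * cnj (of_real s * z)) * D3)
         + \<i> * of_real s * of_real ((cmod z)^2) * D3"
proof -
  define x where "x = (of_real (Re z) :: complex)"
  define y where "y = (of_real (Im z) :: complex)"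
  have z: "z = x + \<i> * y" unfolding x_def y_def by (simp add: complex_eq_iff)
  have cz: "cnj z = x - \<i> * y" unfolding x_def y_def by (simp add: complex_eq_iff)
  have cs: "cnj (of_real s * z) = of_real s * cnj z" by simp
  have c: "of_real ((cmod z)^2) = z * cnj z" using complex_norm_square by simp
  have ii: "\<i> * \<i> = -1" by simp
  have A2: "2 * (D1 + \<i> * D2 - \<i> * (of_real s * z) * D3) = 0"
    using assms by (simp add: field_simps)
  have A: "D1 + \<i> * D2 - \<i> * (of_real s * z) * D3 = 0"
    using A2 by (metis mult_eq_0_iff zero_neq_numeral)
  have L: "Re z *\<^sub>R D1 + Im z *\<^sub>R D2 = x * D1 + y * D2"
    unfolding x_def y_def scaleR_conv_of_real by simp
  show ?thesis unfolding L cs c cz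
    using A ii z by algebra
qed

lemma chain_vd:
  fixes h :: "'a::real_normed_vector \<Rightarrow> complex"
  assumes f: "(f has_vector_derivative V) (at s)" and h: "h differentiable (at (f s))"
  shows "((\<lambda>s. h (f s)) has_vector_derivative frechet_derivative h (at (f s)) V) (at s)"
proof -
  let ?h' = "frechet_derivative h (at (f s))"
  have d: "(h has_derivative ?h') (at (f s))" using h frechet_derivative_works by blast
  have l: "(f has_derivative (\<lambda>a. a *\<^sub>R V)) (at s)" using f unfolding has_vector_derivative_def .
  have "((\<lambda>a. h (f a)) has_derivative (\<lambda>a. ?h' (a *\<^sub>R V))) (at s)"
    using has_derivative_compose[OF l d] by (simp add: o_def)
  moreover have "(\<lambda>a. ?h' (a *\<^sub>R V)) = (\<lambda>a. a *\<^sub>R ?h' V)"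
    using d has_derivative_bounded_linear
    by (metis bounded_linear.linear linear_cmul)
  ultimately show ?thesis unfolding has_vector_derivative_def by simp
qed

lemma dil_vd: "((\<lambda>s. dil s p) has_vector_derivative (fst p, 2 * s * snd p)) (at s)"
proof -
  have a: "((\<lambda>s. s^2 * snd p) has_vector_derivative 2 * s * snd p) (at s)"
    unfolding has_real_derivative_iff_has_vector_derivative[symmetric]
    by (auto intro!: derivative_eq_intros)
  have b: "((\<lambda>s. s *\<^sub>R fst p) has_vector_derivative fst p) (at s)"
    unfolding has_vector_derivative_def by (auto intro!: derivative_eq_intros)
  show ?thesis unfolding dil_def using has_vector_derivative_Pair[OF b a] by simp
qed

lemma vec_decomp:
  fixes z :: "complex ^ 'n::finite" and \<tau> :: real
  shows "(z, \<tau>) = (\<Sum>a\<in>UNIV. Re (z$a) *\<^sub>R (axis a 1, 0) + Im (z$a) *\<^sub>R (axis a \<i>, 0)) + \<tau> *\<^sub>R (0, 1)"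
proof -
  have "(\<Sum>a\<in>UNIV. Re (z$a) *\<^sub>R (axis a (1::complex), 0::real) + Im (z$a) *\<^sub>R (axis a \<i>, 0))
        = (\<Sum>a\<in>UNIV. (Re (z$a) *\<^sub>R axis a 1 + Im (z$a) *\<^sub>R axis a \<i>, 0::real))"
    by (simp add: scaleR_prod_def)
  also have "\<dots> = (\<Sum>a\<in>UNIV. Re (z$a) *\<^sub>R axis a 1 + Im (z$a) *\<^sub>R axis a \<i>, 0)"
    by (simp add: sum_prod)
  also have "(\<Sum>a\<in>UNIV. Re (z$a) *\<^sub>R axis a 1 + Im (z$a) *\<^sub>R axis a \<i>) = z"
  proof (subst vec_eq_iff, intro allI)
    fix b
    have "(\<Sum>a\<in>UNIV. Re (z$a) *\<^sub>R axis a (1::complex) + Im (z$a) *\<^sub>R axis a \<i>) $ b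
        = (\<Sum>a\<in>UNIV. (if b = a then Re (z$a) *\<^sub>R 1 + Im (z$a) *\<^sub>R \<i> else 0))"
      by (simp add: sum_component axis_def if_distrib cong: if_cong)
    also have "\<dots> = Re (z$b) *\<^sub>R 1 + Im (z$b) *\<^sub>R \<i>" by simp
    also have "\<dots> = z $ b" by (simp add: scaleR_conv_of_real complex_eq_iff)
    finally show "(\<Sum>a\<in>UNIV. Re (z$a) *\<^sub>R axis a (1::complex) + Im (z$a) *\<^sub>R axis a \<i>) $ b = z $ b" .
  qed
  finally show ?thesis by (simp add: scaleR_prod_def)
qed

lemma frechet_decomp:
  fixes h :: "'n::finite heis \<Rightarrow> complex"
  assumes "h differentiable (at q)"
  shows "frechet_derivative h (at q) (z, \<tau>)
     = (\<Sum>a\<in>UNIV. Re (z$a) *\<^sub>R dx a h q + Im (z$a) *\<^sub>R dy a h q) + \<tau> *\<^sub>R dt h q"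
proof -
  let ?L = "frechet_derivative h (at q)"
  have lin: "linear ?L"
    using assms frechet_derivative_works has_derivative_bounded_linear bounded_linear.linear by blast
  have "?L (z, \<tau>) = ?L ((\<Sum>a\<in>UNIV. Re (z$a) *\<^sub>R (axis a 1, 0) + Im (z$a) *\<^sub>R (axis a \<i>, 0)) + \<tau> *\<^sub>R (0, 1))"
    using vec_decomp[of z \<tau>] by (rule arg_cong)
  also have "\<dots> = ?L (\<Sum>a\<in>UNIV. Re (z$a) *\<^sub>R (axis a 1, 0) + Im (z$a) *\<^sub>R (axis a \<i>, 0)) + \<tau> *\<^sub>R ?L (0, 1)"
    by (simp only: linear_add[OF lin] linear_cmul[OF lin])
  also have "?L (\<Sum>a\<in>UNIV. Re (z$a) *\<^sub>R (axis a 1, 0) + Im (z$a) *\<^sub>R (axis a \<i>, 0))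
      = (\<Sum>a\<in>UNIV. Re (z$a) *\<^sub>R ?L (axis a 1, 0) + Im (z$a) *\<^sub>R ?L (axis a \<i>, 0))"
    by (simp only: linear_sum[OF lin] o_def linear_add[OF lin] linear_cmul[OF lin])
  finally show ?thesis
    unfolding dx_def dy_def dt_def dirD_frechet[OF assms] .
qed

lemma dil_deriv_gen:
  fixes h :: "'n::finite heis \<Rightarrow> complex"
  assumes "h differentiable (at (dil s p))"
  shows "((\<lambda>s. h (dil s p)) has_vector_derivative
     (\<Sum>a\<in>UNIV. of_real (Re (fst p $ a)) * dx a h (dil s p) + of_real (Im (fst p $ a)) * dy a h (dil s p))
       + of_real s * (of_real (2 * snd p) * dt h (dil s p))) (at s)"
proof -
  have "((\<lambda>s. h (dil s p)) has_vector_derivative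
     frechet_derivative h (at (dil s p)) (fst p, 2 * s * snd p)) (at s)"
    by (rule chain_vd[OF dil_vd assms])
  also have "frechet_derivative h (at (dil s p)) (fst p, 2 * s * snd p)
    = (\<Sum>a\<in>UNIV. of_real (Re (fst p $ a)) * dx a h (dil s p) + of_real (Im (fst p $ a)) * dy a h (dil s p))
       + of_real s * (of_real (2 * snd p) * dt h (dil s p))"
    unfolding frechet_decomp[OF assms] by (simp add: scaleR_conv_of_real)
  finally show ?thesis .
qed

lemma dil_deriv_CR:
  fixes h :: "'n::finite heis \<Rightarrow> complex"
  assumes U: "open U" and h: "Cinf_on U h" "CR U h" and q: "dil s p \<in> U"
  shows "((\<lambda>s. h (dil s p)) has_vector_derivative
     (\<Sum>a\<in>UNIV. (fst p $ a) * ZR a h (dil s p)) + of_real s * (2 * zcoord None p * heis_Z0 h (dil s p))) (at s)"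
proof -
  have d: "h differentiable (at (dil s p))" using Cinf_diff_at[OF U h(1) q] .
  let ?q = "dil s p"
  have qa: "fst ?q $ a = of_real s * (fst p $ a)" for a unfolding dil_def by (simp del: scaleR_conv_of_real) (simp add: scaleR_conv_of_real)
  have pa: "of_real (Re (fst p $ a)) * dx a h ?q + of_real (Im (fst p $ a)) * dy a h ?q
      = (fst p $ a) * ZR a h ?q + \<i> * of_real s * of_real ((cmod (fst p $ a))^2) * dt h ?q" for a
  proof -
    have z: "heis_Zbar a h ?q = 0" using h(2) q unfolding CR_def by blast
    have hyp: "(1/2) * dx a h ?q + (\<i>/2) * dy a h ?q + (0 + -(\<i>/2) * (of_real s * (fst p $ a))) * dt h ?q = 0"
      using z unfolding Zbar_gop gop_def aff_def qa dx_def dy_def dt_def by simp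
    have "ZR a h ?q = (1/2) * dx a h ?q + (-\<i>/2) * dy a h ?q + (0 + -(\<i>/2) * cnj (of_real s * (fst p $ a))) * dt h ?q"
      unfolding ZR_def gop_def aff_def qa dx_def dy_def dt_def by simp
    then show ?thesis using per_a[OF hyp] by (simp add: scaleR_conv_of_real)
  qed
  have sq: "(\<Sum>a\<in>UNIV. of_real ((cmod (fst p $ a))^2)) = (of_real (\<Sum>a\<in>UNIV. (cmod (fst p $ a))^2) :: complex)"
    by simp
  have "(\<Sum>a\<in>UNIV. of_real (Re (fst p $ a)) * dx a h ?q + of_real (Im (fst p $ a)) * dy a h ?q)
       + of_real s * (of_real (2 * snd p) * dt h ?q)
     = (\<Sum>a\<in>UNIV. (fst p $ a) * ZR a h ?q) + \<i> * of_real s * (\<Sum>a\<in>UNIV. of_real ((cmod (fst p $ a))^2)) * dt h ?q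
       + of_real s * (of_real (2 * snd p) * dt h ?q)"
    unfolding pa by (simp add: sum.distrib sum_distrib_left sum_distrib_right)
  also have "\<dots> = (\<Sum>a\<in>UNIV. (fst p $ a) * ZR a h ?q) + of_real s * (2 * zcoord None p * heis_Z0 h ?q)"
    unfolding sq by (simp add: heis_Z0_def algebra_simps)
  finally show ?thesis using dil_deriv_gen[OF d] by simp
qed

inductive good :: "'n::finite heis set \<Rightarrow> 'n heis \<Rightarrow> (real \<Rightarrow> complex) \<Rightarrow> bool" for U p where
  base: "Cinf_on U h \<Longrightarrow> good U p (\<lambda>s. h (dil s p))"
| add: "good U p a \<Longrightarrow> good U p b \<Longrightarrow> good U p (\<lambda>s. a s + b s)"
| cmul: "good U p a \<Longrightarrow> good U p (\<lambda>s. c * a s)"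
| smul: "good U p a \<Longrightarrow> good U p (\<lambda>s. of_real s * a s)"

lemma good_zero: "good U p (\<lambda>s. 0)"
  using good.base[OF Cinf_zero[of U]] by simp

lemma good_sum: "finite A \<Longrightarrow> (\<forall>i\<in>A. good U p (f i)) \<Longrightarrow> good U p (\<lambda>s. \<Sum>i\<in>A. f i s)"
  by (induction A rule: finite_induct) (auto intro: good_zero good.add)

lemma open_T: "open U \<Longrightarrow> open {s::real. dil s p \<in> U}"
proof -
  assume U: "open U"
  have "continuous_on UNIV (\<lambda>s::real. dil s p)"
    unfolding dil_def by (intro continuous_intros)
  then have "open ((\<lambda>s::real. dil s p) -` U)"
    using U by (simp add: continuous_on_open_vimage)
  then show ?thesis by (simp add: vimage_def)
qed

lemma zero_T: "0 \<in> U \<Longrightarrow> 0 \<in> {s::real. dil s p \<in> U}"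
  by (simp add: dil_def zero_prod_def)

lemma good_deriv:
  assumes U: "open U" and g: "good U p a"
  shows "\<exists>a'. good U p a' \<and> (\<forall>s\<in>{s. dil s p \<in> U}. (a has_vector_derivative a' s) (at s))"
  using g
proof induction
  case (base h)
  let ?a' = "\<lambda>s. (\<Sum>a\<in>UNIV. of_real (Re (fst p $ a)) * dx a h (dil s p) + of_real (Im (fst p $ a)) * dy a h (dil s p))
       + of_real s * (of_real (2 * snd p) * dt h (dil s p))"
  have "good U p ?a'"
    unfolding dx_def[abs_def] dy_def[abs_def] dt_def[abs_def]
    by (intro good.add good.cmul good.smul good_sum ballI good.base Cinf_dirD base) auto
  moreover have "\<forall>s\<in>{s. dil s p \<in> U}. ((\<lambda>s. h (dil s p)) has_vector_derivative ?a' s) (at s)"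
    using dil_deriv_gen Cinf_diff_at[OF U base] by blast
  ultimately show ?case by blast
next
  case (add a b)
  then obtain a' b' where "good U p a'" "good U p b'"
    "\<forall>s\<in>{s. dil s p \<in> U}. (a has_vector_derivative a' s) (at s)"
    "\<forall>s\<in>{s. dil s p \<in> U}. (b has_vector_derivative b' s) (at s)" by blast
  then show ?case
    by (intro exI[of _ "\<lambda>s. a' s + b' s"]) (auto intro: good.add has_vector_derivative_add)
next
  case (cmul a c)
  then obtain a' where "good U p a'"
    "\<forall>s\<in>{s. dil s p \<in> U}. (a has_vector_derivative a' s) (at s)" by blast
  then show ?case
    by (intro exI[of _ "\<lambda>s. c * a' s"]) (auto intro: good.cmul has_vector_derivative_mult_right)
next
  case (smul a)
  then obtain a' where a': "good U p a'"
    "\<forall>s\<in>{s. dil s p \<in> U}. (a has_vector_derivative a' s) (at s)" by blast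
  have "((\<lambda>s. of_real s * a s) has_vector_derivative a s + of_real s * a' s) (at s)"
    if "s \<in> {s. dil s p \<in> U}" for s
  proof -
    have "((\<lambda>s. complex_of_real s) has_vector_derivative 1) (at s)"
      using has_vector_derivative_of_real[OF DERIV_ident] by simp
    from has_vector_derivative_mult[OF this a'(2)[rule_format, OF that]]
    show ?thesis by (simp add: add.commute)
  qed
  moreover have "good U p (\<lambda>s. a s + of_real s * a' s)"
    by (intro good.add good.smul smul a')
  ultimately show ?case by blast
qed

lemma sderiv_Suc': "sderiv (Suc k) g = sderiv k (\<lambda>s. vector_derivative g (at s))"
  by (induction k) auto

lemma sderiv_cong:
  assumes T: "open T" and eq: "\<forall>s\<in>T. a s = b s"
  shows "\<forall>s\<in>T. sderiv k a s = sderiv k b s"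
proof (induction k)
  case 0 then show ?case using eq by simp
next
  case (Suc k)
  show ?case
  proof
    fix s assume s: "s \<in> T"
    have ev: "eventually (\<lambda>x. x \<in> UNIV \<longrightarrow> sderiv k a x = sderiv k b x) (nhds s)"
      using Suc T s unfolding eventually_nhds by auto
    show "sderiv (Suc k) a s = sderiv (Suc k) b s"
      by simp (rule vector_derivative_cong_eq[OF ev]; simp)
  qed
qed

lemma good_sderiv:
  assumes U: "open U" and g: "good U p a"
  shows "\<exists>b. good U p b \<and> (\<forall>s\<in>{s. dil s p \<in> U}. sderiv k a s = b s)"
proof (induction k)
  case 0 then show ?case using g by auto
next
  case (Suc k)
  then obtain b where b: "good U p b" "\<forall>s\<in>{s. dil s p \<in> U}. sderiv k a s = b s" by blast
  obtain b' where b': "good U p b'" "\<forall>s\<in>{s. dil s p \<in> U}. (b has_vector_derivative b' s) (at s)"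
    using good_deriv[OF U b(1)] by blast
  have "\<forall>s\<in>{s. dil s p \<in> U}. sderiv (Suc k) a s = b' s"
  proof
    fix s assume s: "s \<in> {s. dil s p \<in> U}"
    have "sderiv (Suc k) a s = vector_derivative b (at s)"
      using sderiv_cong[OF open_T[OF U] b(2), of 1] s by simp
    also have "\<dots> = b' s" using b'(2) s vector_derivative_at by blast
    finally show "sderiv (Suc k) a s = b' s" .
  qed
  then show ?case using b' by blast
qed

lemma good_sderiv_vd:
  assumes U: "open U" and g: "good U p a" and s: "s \<in> {s. dil s p \<in> U}"
  shows "(sderiv k a has_vector_derivative sderiv (Suc k) a s) (at s)"
proof -
  obtain b where b: "good U p b" "\<forall>s\<in>{s. dil s p \<in> U}. sderiv k a s = b s"
    using good_sderiv[OF U g] by blast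
  obtain b' where b': "good U p b'" "\<forall>s\<in>{s. dil s p \<in> U}. (b has_vector_derivative b' s) (at s)"
    using good_deriv[OF U b(1)] by blast
  have "(sderiv k a has_vector_derivative b' s) (at s)"
    by (rule has_vector_derivative_transform_within_open[OF _ open_T[OF U] s])
       (use b b' s in auto)
  moreover then have "sderiv (Suc k) a s = b' s" using vector_derivative_at by fastforce
  ultimately show ?thesis by simp
qed

lemma sderiv_add:
  assumes U: "open U" and a: "good U p a" and b: "good U p b"
  shows "\<forall>s\<in>{s. dil s p \<in> U}. sderiv k (\<lambda>s. a s + b s) s = sderiv k a s + sderiv k b s"
proof (induction k)
  case 0 then show ?case by simp
next
  case (Suc k)
  show ?case
  proof
    fix s assume s: "s \<in> {s. dil s p \<in> U}"
    have "sderiv (Suc k) (\<lambda>s. a s + b s) s = sderiv 1 (\<lambda>s. sderiv k a s + sderiv k b s) s"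
      using sderiv_cong[OF open_T[OF U] Suc, of 1] s by simp
    also have "\<dots> = sderiv (Suc k) a s + sderiv (Suc k) b s"
      using has_vector_derivative_add[OF good_sderiv_vd[OF U a s, of k] good_sderiv_vd[OF U b s, of k]]
      by (simp add: vector_derivative_at)
    finally show "sderiv (Suc k) (\<lambda>s. a s + b s) s = sderiv (Suc k) a s + sderiv (Suc k) b s" .
  qed
qed

lemma sderiv_cmul:
  assumes U: "open U" and a: "good U p a"
  shows "\<forall>s\<in>{s. dil s p \<in> U}. sderiv k (\<lambda>s. c * a s) s = c * sderiv k a s"
proof (induction k)
  case 0 then show ?case by simp
next
  case (Suc k)
  show ?case
  proof
    fix s assume s: "s \<in> {s. dil s p \<in> U}"
    have "sderiv (Suc k) (\<lambda>s. c * a s) s = sderiv 1 (\<lambda>s. c * sderiv k a s) s"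
      using sderiv_cong[OF open_T[OF U] Suc, of 1] s by simp
    also have "\<dots> = c * sderiv (Suc k) a s"
      using has_vector_derivative_mult_right[OF good_sderiv_vd[OF U a s, of k], of c]
      by (simp add: vector_derivative_at)
    finally show "sderiv (Suc k) (\<lambda>s. c * a s) s = c * sderiv (Suc k) a s" .
  qed
qed

lemma sderiv_smul:
  assumes U: "open U" and a: "good U p a"
  shows "\<forall>s\<in>{s. dil s p \<in> U}. sderiv k (\<lambda>s. of_real s * a s) s
             = of_real s * sderiv k a s + of_nat k * sderiv (k - 1) a s"
proof (induction k)
  case 0 then show ?case by simp
next
  case (Suc k)
  show ?case
  proof
    fix s assume s: "s \<in> {s. dil s p \<in> U}"
    have "sderiv (Suc k) (\<lambda>s. of_real s * a s) s
        = sderiv 1 (\<lambda>s. of_real s * sderiv k a s + of_nat k * sderiv (k - 1) a s) s"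
      using sderiv_cong[OF open_T[OF U] Suc, of 1] s by simp
    also have "\<dots> = of_real s * sderiv (Suc k) a s + of_nat (Suc k) * sderiv k a s"
    proof -
      have r: "((\<lambda>s. complex_of_real s) has_vector_derivative 1) (at s)"
        using has_vector_derivative_of_real[OF DERIV_ident] by simp
      have m: "((\<lambda>s. of_real s * sderiv k a s) has_vector_derivative
                 of_real s * sderiv (Suc k) a s + sderiv k a s) (at s)"
        using has_vector_derivative_mult[OF r good_sderiv_vd[OF U a s, of k]] by simp
      have t: "((\<lambda>s. of_nat k * sderiv (k - 1) a s) has_vector_derivative of_nat k * sderiv k a s) (at s)"
      proof (cases k)
        case 0 then show ?thesis by simp
      next
        case (Suc j)
        then show ?thesis
          using has_vector_derivative_mult_right[OF good_sderiv_vd[OF U a s, of j], of "of_nat k"] by simp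
      qed
      show ?thesis using has_vector_derivative_add[OF m t]
        by (simp add: vector_derivative_at algebra_simps)
    qed
    finally show "sderiv (Suc k) (\<lambda>s. of_real s * a s) s
             = of_real s * sderiv (Suc k) a s + of_nat (Suc k) * sderiv (Suc k - 1) a s" by simp
  qed
qed

lemma sderiv_zero: "sderiv k (\<lambda>s. 0) = (\<lambda>s. 0)"
  by (induction k) (auto simp: vector_derivative_at)

lemma sderiv_sum:
  assumes U: "open U" and fin: "finite A"
  shows "(\<forall>i\<in>A. good U p (f i)) \<Longrightarrow>
     \<forall>s\<in>{s. dil s p \<in> U}. sderiv k (\<lambda>s. \<Sum>i\<in>A. f i s) s = (\<Sum>i\<in>A. sderiv k (f i) s)"
  using fin
proof (induction A rule: finite_induct)
  case empty then show ?case by (simp add: sderiv_zero)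
next
  case (insert x F)
  have g: "good U p (\<lambda>s. \<Sum>i\<in>F. f i s)" using good_sum insert by blast
  show ?case
    using sderiv_add[OF U _ g, of "f x" k] insert by simp
qed

lemma list_wt_Nil[simp]: "list_wt [] = 0" by (simp add: list_wt_def)
lemma list_wt_Cons[simp]: "list_wt (x # K) = idx_wt x + list_wt K" by (simp add: list_wt_def)
lemma list_wt_append[simp]: "list_wt (A @ B) = list_wt A + list_wt B" by (simp add: list_wt_def)

lemma idx_wt_pos: "idx_wt x \<ge> 1" by (cases x) auto

lemma length_le_wt: "length K \<le> list_wt K"
proof (induction K)
  case Nil then show ?case by simp
next
  case (Cons a K) then show ?case using idx_wt_pos[of a] by simp
qed

lemma L_finite: "finite {K :: ('n::finite) option list. list_wt K = n}"
proof -
  have "{K :: 'n option list. list_wt K = n} \<subseteq> {K. set K \<subseteq> UNIV \<and> length K \<le> n}"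
    using length_le_wt by fastforce
  moreover have "finite {K :: 'n option list. set K \<subseteq> UNIV \<and> length K \<le> n}"
    by (rule finite_lists_length_le) simp
  ultimately show ?thesis by (rule finite_subset)
qed

lemma list_wt_sum_nth: "list_wt K = (\<Sum>j<length K. idx_wt (K ! j))"
  unfolding list_wt_def by (simp add: sum_list_sum_nth atLeast0LessThan)

lemma fact_div_aux: fixes A :: complex shows "of_nat (Suc n) * (A / of_nat (fact (Suc n))) = A / of_nat (fact n)"
proof -
  have nz2: "(of_nat (Suc n) :: complex) \<noteq> 0" by (simp only: of_nat_eq_0_iff)
  have "of_nat (fact (Suc n)) = (of_nat (Suc n) :: complex) * of_nat (fact n)"
    by (simp only: fact_Suc of_nat_mult of_nat_id)
  then show ?thesis using nz2 by (simp del: of_nat_Suc)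
qed

definition del :: "nat \<Rightarrow> 'a list \<Rightarrow> 'a list" where
  "del j K = take j K @ drop (Suc j) K"

definition ins :: "nat \<Rightarrow> 'a \<Rightarrow> 'a list \<Rightarrow> 'a list" where
  "ins j x J = take j J @ x # drop j J"

lemma length_del: "j < length K \<Longrightarrow> length (del j K) = length K - 1"
  by (simp add: del_def)

lemma ins_del: "j < length K \<Longrightarrow> ins j (K ! j) (del j K) = K"
  unfolding ins_def del_def by (simp add: min_def id_take_nth_drop[symmetric])

lemma nth_ins: "j \<le> length J \<Longrightarrow> ins j x J ! j = x"
  unfolding ins_def by (simp add: nth_append min_def)

lemma del_ins: "j \<le> length J \<Longrightarrow> del j (ins j x J) = J"
  unfolding ins_def del_def by (simp add: min_def)

lemma length_ins: "j \<le> length J \<Longrightarrow> length (ins j x J) = Suc (length J)"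
  unfolding ins_def by simp

lemma list_wt_ins: "j \<le> length J \<Longrightarrow> list_wt (ins j x J) = idx_wt x + list_wt J"
  unfolding ins_def by (metis append_take_drop_id list_wt_Cons list_wt_append add.left_commute)

lemma list_wt_del: "j < length K \<Longrightarrow> list_wt K = idx_wt (K ! j) + list_wt (del j K)"
  using list_wt_ins[of j "del j K" "K ! j"] ins_del[of j K] length_del[of j K] by simp

lemma comb:
  fixes W :: "'n::finite option list \<Rightarrow> complex"
  assumes sym: "\<And>x J j. j \<le> length J \<Longrightarrow> W (ins j x J) = W (x # J)"
  shows "of_nat (Suc m) * (\<Sum>K\<in>{K. list_wt K = Suc m}. W K / of_nat (fact (length K)))
    = (\<Sum>x\<in>{x. idx_wt x \<le> Suc m}. of_nat (idx_wt x) *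
          (\<Sum>J\<in>{J. list_wt J = Suc m - idx_wt x}. W (x # J) / of_nat (fact (length J))))"
proof -
  define F where "F x J = of_nat (idx_wt x) * W (x # J) / of_nat (fact (Suc (length J)))" for x J
  define S1 :: "('n option list \<times> nat) set" where "S1 = (SIGMA K:{K. list_wt K = Suc m}. {..<length K})"
  define S2 :: "('n option \<times> 'n option list \<times> nat) set" where "S2 = (SIGMA x:{x. idx_wt x \<le> Suc m}. SIGMA J:{J. list_wt J = Suc m - idx_wt x}. {..length J})"
  have fin1: "finite {K :: 'n option list. list_wt K = Suc m}" by (rule L_finite)
  have "of_nat (Suc m) * (\<Sum>K\<in>{K. list_wt K = Suc m}. W K / of_nat (fact (length K)))
      = (\<Sum>K\<in>{K. list_wt K = Suc m}. of_nat (list_wt K) * (W K / of_nat (fact (length K))))"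
    by (simp add: sum_distrib_left)
  also have "\<dots> = (\<Sum>K\<in>{K. list_wt K = Suc m}. \<Sum>j<length K. F (K ! j) (del j K))"
  proof (rule sum.cong[OF refl])
    fix K :: "'n option list" assume K: "K \<in> {K. list_wt K = Suc m}"
    have "of_nat (list_wt K) * (W K / of_nat (fact (length K)))
        = (\<Sum>j<length K. of_nat (idx_wt (K ! j)) * (W K / of_nat (fact (length K))))"
      unfolding list_wt_sum_nth by (simp add: sum_distrib_right sum_divide_distrib)
    also have "\<dots> = (\<Sum>j<length K. F (K ! j) (del j K))"
    proof (rule sum.cong[OF refl])
      fix j assume j: "j \<in> {..<length K}"
      then have j': "j < length K" by simp
      have "W K = W (K ! j # del j K)"
        using sym[of j "del j K" "K ! j"] ins_del[OF j'] length_del[OF j'] j' by simp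
      moreover have "Suc (length (del j K)) = length K" using length_del[OF j'] j' by simp
      ultimately show "of_nat (idx_wt (K ! j)) * (W K / of_nat (fact (length K))) = F (K ! j) (del j K)"
        unfolding F_def by simp
    qed
    finally show "of_nat (list_wt K) * (W K / of_nat (fact (length K))) = (\<Sum>j<length K. F (K ! j) (del j K))" .
  qed
  also have "\<dots> = (\<Sum>(K, j)\<in>S1. F (K ! j) (del j K))"
    unfolding S1_def by (rule sum.Sigma[OF fin1]) auto
  also have "\<dots> = (\<Sum>(x, J, j)\<in>S2. F x J)"
  proof (rule sum.reindex_bij_witness[where i = "\<lambda>(x, J, j). (ins j x J, j)"
                                      and j = "\<lambda>(K, j). (K ! j, del j K, j)"])
    fix a assume a: "a \<in> S1"
    then obtain K j where aa: "a = (K, j)" "list_wt K = Suc m" "j < length K" unfolding S1_def by auto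
    show "(case case a of (K, j) \<Rightarrow> (K ! j, del j K, j) of (x, J, j) \<Rightarrow> (ins j x J, j)) = a"
      using aa ins_del by simp
    show "(case a of (K, j) \<Rightarrow> (K ! j, del j K, j)) \<in> S2"
      using aa list_wt_del[OF aa(3)] length_del[OF aa(3)] unfolding S2_def by auto
    show "(case case a of (K, j) \<Rightarrow> (K ! j, del j K, j) of (x, J, j) \<Rightarrow> F x J)
        = (case a of (K, j) \<Rightarrow> F (K ! j) (del j K))" using aa by simp
  next
    fix b assume b: "b \<in> S2"
    then obtain x J j where bb: "b = (x, J, j)" "idx_wt x \<le> Suc m" "list_wt J = Suc m - idx_wt x" "j \<le> length J"
      unfolding S2_def by auto
    show "(case case b of (x, J, j) \<Rightarrow> (ins j x J, j) of (K, j) \<Rightarrow> (K ! j, del j K, j)) = b"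
      using bb nth_ins[OF bb(4)] del_ins[OF bb(4)] by simp
    show "(case b of (x, J, j) \<Rightarrow> (ins j x J, j)) \<in> S1"
      using bb list_wt_ins[OF bb(4)] length_ins[OF bb(4)] unfolding S1_def by auto
  qed
  also have "\<dots> = (\<Sum>x\<in>{x. idx_wt x \<le> Suc m}. \<Sum>J\<in>{J. list_wt J = Suc m - idx_wt x}. \<Sum>j\<in>{..length J}. F x J)"
    unfolding S2_def
    by (subst sum.Sigma[symmetric]; (subst sum.Sigma[symmetric])?) (auto intro: L_finite)
  also have "\<dots> = (\<Sum>x\<in>{x. idx_wt x \<le> Suc m}. of_nat (idx_wt x) *
          (\<Sum>J\<in>{J. list_wt J = Suc m - idx_wt x}. W (x # J) / of_nat (fact (length J))))"
  proof (rule sum.cong[OF refl])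
    fix x :: "'n option"
    have "(\<Sum>J\<in>{J. list_wt J = Suc m - idx_wt x}. \<Sum>j\<in>{..length J}. F x J)
        = (\<Sum>J\<in>{J. list_wt J = Suc m - idx_wt x}. of_nat (idx_wt x) * (W (x # J) / of_nat (fact (length J))))"
    proof (rule sum.cong[OF refl])
      fix J :: "'n option list"
      have "(\<Sum>j\<in>{..length J}. F x J) = of_nat (Suc (length J)) * F x J" by simp
      also have "\<dots> = of_nat (idx_wt x) * (W (x # J) / of_nat (fact (length J)))"
        unfolding F_def using fact_div_aux[of "length J" "of_nat (idx_wt x) * W (x # J)"]
        by (simp only: times_divide_eq_right[symmetric] mult.assoc)
      finally show "(\<Sum>j\<in>{..length J}. F x J) = of_nat (idx_wt x) * (W (x # J) / of_nat (fact (length J)))" .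
    qed
    then show "(\<Sum>J\<in>{J. list_wt J = Suc m - idx_wt x}. \<Sum>j\<in>{..length J}. F x J) = of_nat (idx_wt x) *
          (\<Sum>J\<in>{J. list_wt J = Suc m - idx_wt x}. W (x # J) / of_nat (fact (length J)))"
      by (simp add: sum_distrib_left)
  qed
  finally show ?thesis .
qed

lemma sum_wt_split:
  fixes G :: "'n::finite option \<Rightarrow> complex"
  shows "(\<Sum>x\<in>{x. idx_wt x \<le> Suc n}. G x) = (\<Sum>a\<in>UNIV. G (Some a)) + (if 1 \<le> n then G None else 0)"
proof -
  have "(\<Sum>x\<in>{x. idx_wt x \<le> Suc n}. G x) = (\<Sum>x\<in>UNIV. if idx_wt x \<le> Suc n then G x else 0)"
    using sum.inter_filter[of UNIV G "\<lambda>x. idx_wt x \<le> Suc n"] by simp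
  also have "\<dots> = (if idx_wt (None :: 'n option) \<le> Suc n then G None else 0)
        + (\<Sum>x\<in>range Some. if idx_wt x \<le> Suc n then G x else 0)"
    unfolding UNIV_option_conv by (subst sum.insert) auto
  also have "(\<Sum>x\<in>range Some. if idx_wt x \<le> Suc n then G x else 0) = (\<Sum>a\<in>UNIV. G (Some a))"
    by (subst sum.reindex) (auto simp: inj_on_def)
  finally show ?thesis by auto
qed

lemma main_ind:
  fixes p :: "'n::finite heis"
  assumes U: "open U" "0 \<in> U"
  shows "\<forall>h. Cinf_on U h \<longrightarrow> CR U h \<longrightarrow> sderiv m (\<lambda>s. h (dil s p)) 0
     = of_nat (fact m) * (\<Sum>J\<in>{J. list_wt J = m}. zI J p * ZI J h 0 / of_nat (fact (length J)))"
proof (induction m rule: less_induct)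
  case (less m)
  show ?case
  proof (intro allI impI)
    fix h :: "'n heis \<Rightarrow> complex"
    assume h: "Cinf_on U h" "CR U h"
    show "sderiv m (\<lambda>s. h (dil s p)) 0
     = of_nat (fact m) * (\<Sum>J\<in>{J. list_wt J = m}. zI J p * ZI J h 0 / of_nat (fact (length J)))"
    proof (cases m)
      case 0
      have L0: "{J :: 'n option list. list_wt J = 0} = {[]}"
      proof -
        have "list_wt J = 0 \<longleftrightarrow> J = []" for J :: "'n option list"
          using length_le_wt[of J] by auto
        then show ?thesis by auto
      qed
      show ?thesis unfolding 0 L0 by (simp add: dil_def zI_def zero_prod_def)
    next
      case (Suc n)
      define T where "T = {s. dil s p \<in> U}"
      have T: "open T" "0 \<in> T" unfolding T_def using open_T[OF U(1)] zero_T[OF U(2)] by auto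
      define z0 where "z0 = zcoord None p"
      define \<phi> where "\<phi> s = (\<Sum>a\<in>UNIV. (fst p $ a) * ZR a h (dil s p)) + of_real s * (2 * z0 * heis_Z0 h (dil s p))" for s
      have gR: "good U p (\<lambda>s. ZR a h (dil s p))" for a by (intro good.base ZR_Cinf U h)
      have gZ: "good U p (\<lambda>s. heis_Z0 h (dil s p))"
        using good.base[OF Zidx_Cinf[OF U(1) h(1), of None]] by simp
      have g1: "good U p (\<lambda>s. \<Sum>a\<in>UNIV. (fst p $ a) * ZR a h (dil s p))"
        by (intro good_sum ballI good.cmul gR) auto
      have g2: "good U p (\<lambda>s. 2 * z0 * heis_Z0 h (dil s p))" by (intro good.cmul gZ)
      have dphi: "\<forall>s\<in>T. vector_derivative (\<lambda>s. h (dil s p)) (at s) = \<phi> s"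
        using dil_deriv_CR[OF U(1) h] vector_derivative_at unfolding T_def \<phi>_def z0_def by blast
      have "sderiv m (\<lambda>s. h (dil s p)) 0 = sderiv n \<phi> 0"
        unfolding Suc sderiv_Suc' using sderiv_cong[OF T(1) dphi, of n] T(2) by blast
      also have "\<dots> = sderiv n (\<lambda>s. \<Sum>a\<in>UNIV. (fst p $ a) * ZR a h (dil s p)) 0
          + sderiv n (\<lambda>s. of_real s * (2 * z0 * heis_Z0 h (dil s p))) 0"
        using sderiv_add[OF U(1) g1 good.smul[OF g2], of n] T(2) unfolding T_def \<phi>_def[abs_def] by simp
      also have "sderiv n (\<lambda>s. \<Sum>a\<in>UNIV. (fst p $ a) * ZR a h (dil s p)) 0
          = (\<Sum>a\<in>UNIV. (fst p $ a) * sderiv n (\<lambda>s. ZR a h (dil s p)) 0)"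
      proof -
        have gg: "\<forall>a\<in>UNIV. good U p (\<lambda>s. (fst p $ a) * ZR a h (dil s p))" using good.cmul[OF gR] by blast
        show ?thesis
          using sderiv_sum[OF U(1) finite_class.finite_UNIV gg, where k = n]
            sderiv_cmul[OF U(1) gR] T(2) unfolding T_def by simp
      qed
      also have "sderiv n (\<lambda>s. of_real s * (2 * z0 * heis_Z0 h (dil s p))) 0
          = of_nat n * (2 * z0 * sderiv (n - 1) (\<lambda>s. heis_Z0 h (dil s p)) 0)"
        using sderiv_smul[OF U(1) g2, of n] sderiv_cmul[OF U(1) gZ, of "n - 1" "2 * z0"] T(2)
        unfolding T_def by simp
      finally have A: "sderiv m (\<lambda>s. h (dil s p)) 0 =
          (\<Sum>a\<in>UNIV. (fst p $ a) * sderiv n (\<lambda>s. ZR a h (dil s p)) 0)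
          + of_nat n * (2 * z0 * sderiv (n - 1) (\<lambda>s. heis_Z0 h (dil s p)) 0)" .
      define W where "W K = zI K p * ZI K h 0" for K
      have IH1: "sderiv n (\<lambda>s. ZR a h (dil s p)) 0 = of_nat (fact n) *
          (\<Sum>J\<in>{J. list_wt J = n}. zI J p * ZI (Some a # J) h 0 / of_nat (fact (length J)))" for a
        using less[of n] Suc ZR_Cinf[OF U(1) h(1)] CR_ZR[OF U(1) h] ZI_ZR_0[OF U h(1)] by simp
      have IH2: "of_nat n * sderiv (n - 1) (\<lambda>s. heis_Z0 h (dil s p)) 0 = (if 1 \<le> n then of_nat (fact n) *
          (\<Sum>J\<in>{J. list_wt J = n - 1}. zI J p * ZI (None # J) h 0 / of_nat (fact (length J))) else 0)"
      proof (cases "1 \<le> n")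
        case True
        have "sderiv (n - 1) (\<lambda>s. heis_Z0 h (dil s p)) 0 = of_nat (fact (n - 1)) *
          (\<Sum>J\<in>{J. list_wt J = n - 1}. zI J p * ZI J (heis_Z0 h) 0 / of_nat (fact (length J)))"
          using less[of "n - 1"] Suc Zidx_Cinf[OF U(1) h(1), of None] CR_Z0[OF U(1) h] by simp
        moreover have "of_nat n * (of_nat (fact (n - 1)) :: complex) = of_nat (fact n)"
        proof -
          obtain k where k: "n = Suc k" using True by (cases n) auto
          show ?thesis unfolding k by (simp only: diff_Suc_1 fact_Suc of_nat_mult of_nat_id)
        qed
        ultimately show ?thesis using True ZI_Z0_0[OF U h(1)] by (simp add: mult.assoc[symmetric])
      qed simp
      have sym: "W (ins j x J) = W (x # J)" if "j \<le> length J" for x J j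
      proof -
        have "ZI (take j J @ x # drop j J) h 0 = ZI (x # take j J @ drop j J) h 0"
          by (rule ZI_insert[OF U(1) h(1) U(2)])
        moreover have "zI (take j J @ x # drop j J) p = zI (x # take j J @ drop j J) p"
          by (rule zI_insert)
        ultimately show ?thesis unfolding W_def ins_def by simp
      qed
      have C: "of_nat (Suc n) * (\<Sum>K\<in>{K. list_wt K = Suc n}. W K / of_nat (fact (length K)))
        = (\<Sum>x\<in>{x. idx_wt x \<le> Suc n}. of_nat (idx_wt x) *
          (\<Sum>J\<in>{J. list_wt J = Suc n - idx_wt x}. W (x # J) / of_nat (fact (length J))))"
        by (rule comb) (rule sym)
      have "of_nat (fact m) * (\<Sum>J\<in>{J. list_wt J = m}. zI J p * ZI J h 0 / of_nat (fact (length J)))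
          = of_nat (fact n) * (of_nat (Suc n) * (\<Sum>K\<in>{K. list_wt K = Suc n}. W K / of_nat (fact (length K))))"
      proof -
        have "of_nat (fact (Suc n)) = (of_nat (fact n) :: complex) * of_nat (Suc n)"
          by (simp only: fact_Suc of_nat_mult mult.commute of_nat_id)
        then show ?thesis unfolding Suc W_def by (simp only: mult.assoc)
      qed
      also have "\<dots> = of_nat (fact n) * ((\<Sum>a\<in>UNIV.
            (\<Sum>J\<in>{J. list_wt J = n}. W (Some a # J) / of_nat (fact (length J))))
          + (if 1 \<le> n then 2 * (\<Sum>J\<in>{J. list_wt J = n - 1}. W (None # J) / of_nat (fact (length J))) else 0))"
        unfolding C sum_wt_split by simp
      also have "\<dots> = sderiv m (\<lambda>s. h (dil s p)) 0"
      proof -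
        have A': "sderiv m (\<lambda>s. h (dil s p)) 0 =
          (\<Sum>a\<in>UNIV. (fst p $ a) * sderiv n (\<lambda>s. ZR a h (dil s p)) 0)
          + 2 * z0 * (of_nat n * sderiv (n - 1) (\<lambda>s. heis_Z0 h (dil s p)) 0)"
          unfolding A by (simp only: mult.assoc mult.left_commute)
        have P1: "of_nat (fact n) * (\<Sum>a\<in>UNIV.
            (\<Sum>J\<in>{J. list_wt J = n}. W (Some a # J) / of_nat (fact (length J))))
          = (\<Sum>a\<in>UNIV. (fst p $ a) * sderiv n (\<lambda>s. ZR a h (dil s p)) 0)"
          unfolding IH1 W_def zI_def sum_distrib_left
          by (intro sum.cong refl) (simp add: mult.assoc mult.left_commute)
        have P2: "of_nat (fact n) * (if 1 \<le> n then 2 * (\<Sum>J\<in>{J. list_wt J = n - 1}. W (None # J) / of_nat (fact (length J))) else 0)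
          = 2 * z0 * (of_nat n * sderiv (n - 1) (\<lambda>s. heis_Z0 h (dil s p)) 0)"
          unfolding IH2 W_def zI_def sum_distrib_left
          by (cases "1 \<le> n") (simp_all add: z0_def[symmetric] mult.assoc mult.left_commute sum_distrib_left del: zcoord.simps)
        show ?thesis unfolding A' P1[symmetric] P2[symmetric] by (simp only: distrib_left)
      qed
      finally show ?thesis by simp
    qed
  qed
qed

theorem mainTheorem3:
  fixes f :: "'n::finite heis \<Rightarrow> complex" and U :: "'n heis set" and m :: nat
  assumes "open U" and "0 \<in> U" and "Cinf_on U f"
    and "\<forall>a. \<forall>p\<in>U. heis_Zbar a f p = 0"
  shows "weight_part m f =
    (\<lambda>p. \<Sum>I\<in>{I :: 'n option list. list_wt I = m}.
            zI I p * ZI I f 0 / of_nat (fact (length I)))"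
proof (rule ext)
  fix p :: "'n heis"
  have cr: "CR U f" using assms(4) unfolding CR_def by blast
  have e: "sderiv m (\<lambda>s. f (dil s p)) 0
     = of_nat (fact m) * (\<Sum>J\<in>{J. list_wt J = m}. zI J p * ZI J f 0 / of_nat (fact (length J)))"
    using main_ind[OF assms(1,2), of m p] assms(3) cr by blast
  have nz: "(of_nat (fact m) :: complex) \<noteq> 0" by (simp only: of_nat_eq_0_iff) simp
  show "weight_part m f p = (\<Sum>I\<in>{I :: 'n option list. list_wt I = m}.
            zI I p * ZI I f 0 / of_nat (fact (length I)))"
    unfolding weight_part_def e using nz by simp
qed

end
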